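(* Let $k\ge0$ be an integer and let $S=B_k(C)$ or $S=B_k(e)$. Let $\mu$ be an eigenvector process with eigenvalue $\lambda$, $|\lambda|<d$, and let $\mu_S$ denote its marginal on $\mathbb{R}^S$. Then the linear span of the support of $\mu_S$ equals $W_\lambda(S)$.
   Context: $T_d$ is the infinite $d$-regular tree ($d\ge 3$), vertex set $V_d$, root $o$. For $F\subseteq V_d$, $B_k(F)$ is the set of vertices at distance at most $k$ from $F$; $C=B_1(o)$ (the root and its $d$ neighbors) and $e$ is a fixed edge (viewed as a set of two vertices). For finite $F\subseteq V_d$ and $\lambda\in\mathbb{R}$, $W_\lambda(F)$ is the linear subspace of $f\in\mathbb{R}^F$ with $\lambda f(u)=\sum_{w\sim u}f(w)$ for every $u\in F$ with $B_1(u)\subseteq F$. An eigenvector process with eigenvalue $\lambda$ is a family $\{X_u\}_{u\in V_d}$ of real random variables of variance $1$, with law invariant under all automorphisms of $T_d$, satisfying $\sum_{u\sim o}X_u=\lambda X_o$ almost surely. *)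

theory Defs
  imports "HOL-Probability.Probability" "HOL-Library.Function_Algebras"
begin

text \<open>The infinite d-regular tree T_d, realised as the Cayley graph of the free product
of d copies of Z/2: vertices are words over the letters 0..d-1 with no two consecutive
equal letters; the root is the empty word; u and v are adjacent iff one is obtained from
the other by appending one letter.\<close>

definition tree_vertices :: "nat \<Rightarrow> nat list set" where
  "tree_vertices d = {w. set w \<subseteq> {..<d} \<and> (\<forall>i. Suc i < length w \<longrightarrow> w ! i \<noteq> w ! Suc i)}"

definition tree_adj :: "nat \<Rightarrow> nat list \<Rightarrow> nat list \<Rightarrow> bool" where
  "tree_adj d u v \<longleftrightarrow> u \<in> tree_vertices d \<and> v \<in> tree_vertices d \<and>
     ((\<exists>a. v = u @ [a]) \<or> (\<exists>a. u = v @ [a]))"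

definition tree_root :: "nat list" where
  "tree_root = []"

definition tree_nbrs :: "nat \<Rightarrow> nat list \<Rightarrow> nat list set" where
  "tree_nbrs d u = {v. tree_adj d u v}"

text \<open>Automorphisms of T_d (as bijections of the vertex set preserving adjacency);
maps are arbitrary outside the vertex set.\<close>
definition tree_aut :: "nat \<Rightarrow> (nat list \<Rightarrow> nat list) \<Rightarrow> bool" where
  "tree_aut d \<phi> \<longleftrightarrow> bij_betw \<phi> (tree_vertices d) (tree_vertices d) \<and>
     (\<forall>u\<in>tree_vertices d. \<forall>v\<in>tree_vertices d. tree_adj d u v \<longleftrightarrow> tree_adj d (\<phi> u) (\<phi> v))"

fun tree_ball :: "nat \<Rightarrow> nat \<Rightarrow> nat list set \<Rightarrow> nat list set" where
  "tree_ball d 0 F = F \<inter> tree_vertices d"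
| "tree_ball d (Suc k) F = tree_ball d k F \<union> {v. \<exists>u\<in>tree_ball d k F. tree_adj d u v}"

definition tree_C :: "nat \<Rightarrow> nat list set" where
  "tree_C d = tree_ball d 1 {tree_root}"

definition tree_edge :: "nat list set" where
  "tree_edge = {tree_root, [0]}"

text \<open>W_lambda(F), with R^F identified with functions V -> real vanishing outside F.\<close>
definition W_space :: "nat \<Rightarrow> real \<Rightarrow> nat list set \<Rightarrow> (nat list \<Rightarrow> real) set" where
  "W_space d l F = {f. (\<forall>u. u \<notin> F \<longrightarrow> f u = 0) \<and>
     (\<forall>u\<in>F. tree_ball d 1 {u} \<subseteq> F \<longrightarrow> l * f u = (\<Sum>w\<in>tree_nbrs d u. f w))}"

definition eigenvector_process ::
  "nat \<Rightarrow> real \<Rightarrow> 'a measure \<Rightarrow> (nat list \<Rightarrow> 'a \<Rightarrow> real) \<Rightarrow> bool" where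
  "eigenvector_process d l M X \<longleftrightarrow>
     prob_space M \<and>
     (\<forall>u\<in>tree_vertices d. X u \<in> borel_measurable M) \<and>
     (\<forall>u\<in>tree_vertices d. integrable M (\<lambda>\<omega>. (X u \<omega>)\<^sup>2) \<and>
        (\<integral>\<omega>. (X u \<omega> - (\<integral>\<omega>'. X u \<omega>' \<partial>M))\<^sup>2 \<partial>M) = 1) \<and>
     (\<forall>\<phi>. tree_aut d \<phi> \<longrightarrow>
        distr M (PiM (tree_vertices d) (\<lambda>_. borel)) (\<lambda>\<omega>. \<lambda>u\<in>tree_vertices d. X (\<phi> u) \<omega>)
      = distr M (PiM (tree_vertices d) (\<lambda>_. borel)) (\<lambda>\<omega>. \<lambda>u\<in>tree_vertices d. X u \<omega>)) \<and>
     (AE \<omega> in M. (\<Sum>u\<in>tree_nbrs d tree_root. X u \<omega>) = l * X tree_root \<omega>)"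

definition marginal :: "'a measure \<Rightarrow> (nat list \<Rightarrow> 'a \<Rightarrow> real) \<Rightarrow> nat list set \<Rightarrow> (nat list \<Rightarrow> real) set \<Rightarrow> real" where
  "marginal M X S A = measure M {\<omega> \<in> space M. (\<lambda>u. if u \<in> S then X u \<omega> else 0) \<in> A}"

definition marginal_support :: "'a measure \<Rightarrow> (nat list \<Rightarrow> 'a \<Rightarrow> real) \<Rightarrow> nat list set \<Rightarrow> (nat list \<Rightarrow> real) set" where
  "marginal_support M X S = {x. (\<forall>u. u \<notin> S \<longrightarrow> x u = 0) \<and>
     (\<forall>\<epsilon>>0. marginal M X S {y. (\<forall>u. u \<notin> S \<longrightarrow> y u = 0) \<and> (\<forall>u\<in>S. \<bar>y u - x u\<bar> < \<epsilon>)} > 0)}"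

definition fun_span :: "(nat list \<Rightarrow> real) set \<Rightarrow> (nat list \<Rightarrow> real) set" where
  "fun_span A = module.span (\<lambda>(c::real) f. (\<lambda>u. c * f u)) A"

end

theory Submission
  imports Defs
begin

lemma V_iff: "w \<in> tree_vertices d \<longleftrightarrow> set w \<subseteq> {..<d} \<and> successively (\<noteq>) w"
  unfolding tree_vertices_def successively_conv_nth by auto

lemma V_Nil[simp]: "[] \<in> tree_vertices d"
  by (simp add: V_iff)

lemma V_snoc: "u @ [a] \<in> tree_vertices d \<longleftrightarrow> u \<in> tree_vertices d \<and> a < d \<and> (u = [] \<or> last u \<noteq> a)"
  by (auto simp: V_iff successively_append_iff)

lemma V_Cons: "a # w \<in> tree_vertices d \<longleftrightarrow> a < d \<and> w \<in> tree_vertices d \<and> (w = [] \<or> a \<noteq> hd w)"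
  by (auto simp: V_iff successively_Cons)

lemma V_single[simp]: "[a] \<in> tree_vertices d \<longleftrightarrow> a < d"
  by (simp add: V_iff)

lemma V_butlast: "w \<in> tree_vertices d \<Longrightarrow> butlast w \<in> tree_vertices d"
  by (cases w rule: rev_cases) (auto simp: V_snoc)

lemma V_tl: "w \<in> tree_vertices d \<Longrightarrow> tl w \<in> tree_vertices d"
  by (cases w) (auto simp: V_Cons)

lemma V_append: "xs @ ys \<in> tree_vertices d \<longleftrightarrow> xs \<in> tree_vertices d \<and> ys \<in> tree_vertices d \<and> (xs = [] \<or> ys = [] \<or> last xs \<noteq> hd ys)"
  by (auto simp: V_iff successively_append_iff)

lemma V_prefix: "prefix xs ys \<Longrightarrow> ys \<in> tree_vertices d \<Longrightarrow> xs \<in> tree_vertices d"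
  by (auto simp: prefix_def V_append)

lemma adj_iff: "tree_adj d u v \<longleftrightarrow> u \<in> tree_vertices d \<and> v \<in> tree_vertices d \<and> ((\<exists>a. v = u @ [a]) \<or> (\<exists>a. u = v @ [a]))"
  by (simp add: tree_adj_def)

lemma adj_sym: "tree_adj d u v \<longleftrightarrow> tree_adj d v u"
  by (auto simp: tree_adj_def)

lemma nbrs_eq:
  assumes "u \<in> tree_vertices d"
  shows "tree_nbrs d u = {u @ [a] | a. a < d \<and> (u = [] \<or> last u \<noteq> a)} \<union> (if u = [] then {} else {butlast u})"
proof -
  have "v \<in> tree_nbrs d u \<longleftrightarrow> v \<in> {u @ [a] | a. a < d \<and> (u = [] \<or> last u \<noteq> a)} \<union> (if u = [] then {} else {butlast u})" for v
  proof
    assume "v \<in> tree_nbrs d u"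
    then have a: "tree_adj d u v" by (simp add: tree_nbrs_def)
    then show "v \<in> {u @ [a] | a. a < d \<and> (u = [] \<or> last u \<noteq> a)} \<union> (if u = [] then {} else {butlast u})"
      by (auto simp: tree_adj_def V_snoc)
  next
    assume "v \<in> {u @ [a] | a. a < d \<and> (u = [] \<or> last u \<noteq> a)} \<union> (if u = [] then {} else {butlast u})"
    then consider a where "v = u @ [a]" "a < d" "u = [] \<or> last u \<noteq> a" | "u \<noteq> []" "v = butlast u"
      by (auto split: if_splits)
    then show "v \<in> tree_nbrs d u"
    proof cases
      case 1 then show ?thesis using assms by (auto simp: tree_nbrs_def tree_adj_def V_snoc)
    next
      case 2
      then have "u = v @ [last u]" by simp
      then show ?thesis using assms V_butlast[OF assms] 2 unfolding tree_nbrs_def tree_adj_def by blast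
    qed
  qed
  then show ?thesis by blast
qed

lemma nbrs_subset: "tree_nbrs d u \<subseteq> (\<lambda>a. u @ [a]) ` {..<d} \<union> {butlast u}"
  by (auto simp: tree_nbrs_def tree_adj_def V_snoc)

lemma finite_nbrs[simp]: "finite (tree_nbrs d u)"
  by (rule finite_subset[OF nbrs_subset]) auto

lemma nbrs_V: "v \<in> tree_nbrs d u \<Longrightarrow> v \<in> tree_vertices d"
  by (auto simp: tree_nbrs_def tree_adj_def)

lemma ball_V: "tree_ball d k F \<subseteq> tree_vertices d"
  by (induction k) (auto simp: tree_adj_def)

lemma ball_ball: "tree_ball d k (tree_ball d m F) = tree_ball d (k + m) F"
proof (induction k)
  case 0 then show ?case using ball_V by auto
next
  case (Suc k) then show ?case by simp
qed

lemma ball1: "u \<in> tree_vertices d \<Longrightarrow> tree_ball d 1 {u} = insert u (tree_nbrs d u)"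
  by (auto simp: tree_nbrs_def)

definition dp :: "bool \<Rightarrow> nat list \<Rightarrow> nat" where
  "dp e w = (if e \<and> w \<noteq> [] \<and> hd w = 0 then length w - 1 else length w)"

lemma dp_Nil[simp]: "dp e [] = 0" by (simp add: dp_def)

lemma dp_snoc: "dp e (u @ [a]) = (if e \<and> u = [] \<and> a = 0 then 0 else Suc (dp e u))"
  by (cases u) (auto simp: dp_def)

lemma dp_adj: "tree_adj d u v \<Longrightarrow> dp e v \<le> Suc (dp e u)"
  by (auto simp: tree_adj_def dp_snoc)

lemma dp_butlast: "dp e w \<noteq> 0 \<Longrightarrow> dp e w = Suc (dp e (butlast w))"
  by (cases w rule: rev_cases) (auto simp: dp_snoc split: if_splits)

lemma ball_dp:
  assumes "F = (if e then {[], [0]} else {[]})" "d \<ge> 1"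
  shows "tree_ball d k F = {w \<in> tree_vertices d. dp e w \<le> k}"
proof (induction k)
  case 0
  have "w \<in> F" if "w \<in> tree_vertices d" "dp e w = 0" for w
  proof (cases w)
    case Nil then show ?thesis using assms by auto
  next
    case (Cons a w')
    then have "e" "a = 0" "w' = []" using that(2) by (auto simp: dp_def split: if_splits)
    then show ?thesis using assms Cons by simp
  qed
  moreover have "w \<in> tree_vertices d \<and> dp e w = 0" if "w \<in> F" for w
    using assms that by (cases e) (auto simp: dp_def)
  ultimately show ?case by auto
next
  case (Suc k)
  show ?case
  proof (rule set_eqI, rule iffI)
    fix w assume "w \<in> tree_ball d (Suc k) F"
    then consider "w \<in> tree_ball d k F" | u where "u \<in> tree_ball d k F" "tree_adj d u w" by auto
    then show "w \<in> {w \<in> tree_vertices d. dp e w \<le> Suc k}"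
    proof cases
      case 1 then show ?thesis using Suc by auto
    next
      case 2 then show ?thesis using Suc dp_adj[of d u w e] by (auto simp: tree_adj_def)
    qed
  next
    fix w assume w: "w \<in> {w \<in> tree_vertices d. dp e w \<le> Suc k}"
    show "w \<in> tree_ball d (Suc k) F"
    proof (cases "dp e w \<le> k")
      case True then show ?thesis using w Suc by auto
    next
      case False
      then have "dp e w = Suc k" using w by auto
      then have b: "dp e (butlast w) = k" using dp_butlast[of e w] by simp
      have "w \<noteq> []" using \<open>dp e w = Suc k\<close> by auto
      then have "w = butlast w @ [last w]" by simp
      then have "tree_adj d (butlast w) w" using w V_butlast[of w d]
        by (auto simp: tree_adj_def)
      then show ?thesis using b Suc V_butlast[of w d] w by auto
    qed
  qed
qed


lemma aut_V: "tree_aut d \<phi> \<Longrightarrow> u \<in> tree_vertices d \<Longrightarrow> \<phi> u \<in> tree_vertices d"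
  unfolding tree_aut_def by (auto dest: bij_betwE)

lemma aut_by_involution:
  assumes "\<And>w. w \<in> tree_vertices d \<Longrightarrow> \<phi> w \<in> tree_vertices d"
    and "\<And>w. w \<in> tree_vertices d \<Longrightarrow> \<phi> (\<phi> w) = w"
    and "\<And>u v. u \<in> tree_vertices d \<Longrightarrow> v \<in> tree_vertices d \<Longrightarrow> tree_adj d u v \<Longrightarrow> tree_adj d (\<phi> u) (\<phi> v)"
  shows "tree_aut d \<phi>"
  unfolding tree_aut_def
proof safe
  show "bij_betw \<phi> (tree_vertices d) (tree_vertices d)"
    by (rule bij_betw_byWitness[where f'=\<phi>]) (use assms in auto)
next
  fix u v assume uv: "u \<in> tree_vertices d" "v \<in> tree_vertices d" "tree_adj d (\<phi> u) (\<phi> v)"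
  then have "tree_adj d (\<phi> (\<phi> u)) (\<phi> (\<phi> v))" using assms by blast
  then show "tree_adj d u v" using assms uv by simp
qed (use assms in auto)

lemma aut_comp:
  assumes "tree_aut d \<phi>" "tree_aut d \<psi>"
  shows "tree_aut d (\<phi> \<circ> \<psi>)"
  using assms unfolding tree_aut_def
  by (auto intro: bij_betw_trans dest: bij_betwE)

lemma aut_id: "tree_aut d id"
  unfolding tree_aut_def by auto

lemma aut_nbrs:
  assumes "tree_aut d \<phi>" "u \<in> tree_vertices d"
  shows "tree_nbrs d (\<phi> u) = \<phi> ` tree_nbrs d u"
proof
  show "\<phi> ` tree_nbrs d u \<subseteq> tree_nbrs d (\<phi> u)"
    using assms nbrs_V[of _ d u] unfolding tree_aut_def tree_nbrs_def by auto
next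
  show "tree_nbrs d (\<phi> u) \<subseteq> \<phi> ` tree_nbrs d u"
  proof
    fix w assume w: "w \<in> tree_nbrs d (\<phi> u)"
    then have "w \<in> tree_vertices d" by (rule nbrs_V)
    then have "w \<in> \<phi> ` tree_vertices d"
      using assms(1) unfolding tree_aut_def bij_betw_def by simp
    then obtain v where v: "v \<in> tree_vertices d" "w = \<phi> v" by blast
    then have "tree_adj d u v" using w assms unfolding tree_aut_def tree_nbrs_def by auto
    then show "w \<in> \<phi> ` tree_nbrs d u" using v by (auto simp: tree_nbrs_def)
  qed
qed

lemma aut_inj: "tree_aut d \<phi> \<Longrightarrow> inj_on \<phi> (tree_vertices d)"
  unfolding tree_aut_def bij_betw_def by auto

definition Rm :: "nat \<Rightarrow> nat list \<Rightarrow> nat list" where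
  "Rm a w = (if w \<noteq> [] \<and> hd w = a then tl w else a # w)"

lemma Rm_V: "a < d \<Longrightarrow> w \<in> tree_vertices d \<Longrightarrow> Rm a w \<in> tree_vertices d"
  by (cases w) (auto simp: Rm_def V_Cons)

lemma Rm_Rm: assumes "w \<in> tree_vertices d" shows "Rm a (Rm a w) = w"
proof (cases w)
  case Nil then show ?thesis by (simp add: Rm_def)
next
  case (Cons b w')
  show ?thesis
  proof (cases "b = a")
    case True
    then show ?thesis using Cons \<open>w \<in> tree_vertices d\<close>
      by (cases w') (auto simp: Rm_def V_Cons)
  next
    case False then show ?thesis using Cons by (simp add: Rm_def)
  qed
qed

lemma Rm_adj_snoc:
  assumes "a < d" "u \<in> tree_vertices d" "u @ [b] \<in> tree_vertices d"
  shows "tree_adj d (Rm a u) (Rm a (u @ [b]))"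
proof (cases u)
  case Nil then show ?thesis using assms
    by (auto simp: Rm_def tree_adj_def V_Cons)
next
  case (Cons c u')
  have V: "Rm a u \<in> tree_vertices d" "Rm a (u @ [b]) \<in> tree_vertices d" using Rm_V assms by auto
  show ?thesis
  proof (cases "c = a")
    case True then show ?thesis using Cons V by (auto simp: Rm_def tree_adj_def)
  next
    case False then show ?thesis using Cons V by (auto simp: Rm_def tree_adj_def)
  qed
qed

lemma Rm_aut: "a < d \<Longrightarrow> tree_aut d (Rm a)"
proof (rule aut_by_involution)
  fix u v assume a: "a < d" and uv: "u \<in> tree_vertices d" "v \<in> tree_vertices d" "tree_adj d u v"
  then consider x where "v = u @ [x]" | x where "u = v @ [x]" by (auto simp: tree_adj_def)
  then show "tree_adj d (Rm a u) (Rm a v)"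
  proof cases
    case 1 then show ?thesis using Rm_adj_snoc a uv by auto
  next
    case 2 then show ?thesis using Rm_adj_snoc[of a d v x] a uv by (simp add: adj_sym)
  qed
qed (auto simp: Rm_V Rm_Rm)

lemma aut_transitive:
  assumes "u \<in> tree_vertices d"
  shows "\<exists>\<phi>. tree_aut d \<phi> \<and> \<phi> [] = u"
  using assms
proof (induction u)
  case Nil then show ?case using aut_id by (metis id_apply)
next
  case (Cons a u)
  then have a: "a < d" "u \<in> tree_vertices d" "u = [] \<or> a \<noteq> hd u" by (auto simp: V_Cons)
  then obtain \<phi> where \<phi>: "tree_aut d \<phi>" "\<phi> [] = u" using Cons by blast
  have "tree_aut d (Rm a \<circ> \<phi>)" using aut_comp Rm_aut a \<phi> by blast
  moreover have "(Rm a \<circ> \<phi>) [] = a # u" using \<phi> a by (auto simp: Rm_def)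
  ultimately show ?case by blast
qed

definition tr :: "nat \<Rightarrow> nat \<Rightarrow> nat \<Rightarrow> nat" where
  "tr a b x = (if x = a then b else if x = b then a else x)"

lemma tr_tr[simp]: "tr a b (tr a b x) = x" by (simp add: tr_def)
lemma tr_inj: "tr a b x = tr a b y \<longleftrightarrow> x = y" by (auto simp: tr_def)

definition Sw :: "nat list \<Rightarrow> nat \<Rightarrow> nat \<Rightarrow> nat list \<Rightarrow> nat list" where
  "Sw u a b w = (if prefix (u @ [a]) w \<or> prefix (u @ [b]) w then u @ map (tr a b) (drop (length u) w) else w)"

lemma Sw_fix: "\<not> prefix (u @ [a]) w \<Longrightarrow> \<not> prefix (u @ [b]) w \<Longrightarrow> Sw u a b w = w"
  by (simp add: Sw_def)

lemma Sw_ext: "c \<in> {a, b} \<Longrightarrow> Sw u a b (u @ c # r) = u @ tr a b c # map (tr a b) r"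
  by (auto simp: Sw_def)

lemma Sw_child: "Sw u a b (u @ [a]) = u @ [b]"
  using Sw_ext[of a a b u "[]"] by (simp add: tr_def)

context
  fixes d u a b
  assumes ua: "u @ [a] \<in> tree_vertices d" and ub: "u @ [b] \<in> tree_vertices d" and ab: "a \<noteq> b"
begin

lemma Sw_ext_V:
  assumes c: "c \<in> {a, b}" and w: "u @ c # r \<in> tree_vertices d"
  shows "u @ tr a b c # map (tr a b) r \<in> tree_vertices d"
proof -
  have abd: "a < d" "b < d" using ua ub by (auto simp: V_snoc)
  have trd: "x < d \<Longrightarrow> tr a b x < d" for x using abd by (auto simp: tr_def)
  have cr: "c # r \<in> tree_vertices d" and u: "u \<in> tree_vertices d" using w by (auto simp: V_append)
  have r: "r \<in> tree_vertices d" "r = [] \<or> c \<noteq> hd r" using cr by (auto simp: V_Cons)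
  have mr: "map (tr a b) r \<in> tree_vertices d"
    using r(1) trd by (auto simp: V_iff successively_map tr_inj)
  have "tr a b c # map (tr a b) r \<in> tree_vertices d"
    using mr r(2) trd c abd by (cases r) (auto simp: V_Cons tr_inj)
  moreover have "u = [] \<or> last u \<noteq> tr a b c"
    using ua ub c by (auto simp: V_snoc tr_def)
  ultimately show ?thesis using u by (auto simp: V_append)
qed

lemma prefix_ext: "prefix (u @ [c]) w \<Longrightarrow> \<exists>r. w = u @ c # r"
  by (auto simp: prefix_def)

lemma Sw_V: "w \<in> tree_vertices d \<Longrightarrow> Sw u a b w \<in> tree_vertices d"
proof (cases "prefix (u @ [a]) w \<or> prefix (u @ [b]) w")
  case True
  then obtain c r where cr: "c \<in> {a, b}" "w = u @ c # r" by (auto dest: prefix_ext)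
  assume "w \<in> tree_vertices d"
  then show ?thesis using Sw_ext[OF cr(1)] Sw_ext_V[OF cr(1)] cr(2) by simp
qed (simp add: Sw_def)

lemma Sw_Sw: "Sw u a b (Sw u a b w) = w"
proof (cases "prefix (u @ [a]) w \<or> prefix (u @ [b]) w")
  case True
  then obtain c r where cr: "c \<in> {a, b}" "w = u @ c # r" by (auto dest: prefix_ext)
  have "tr a b c \<in> {a, b}" using cr(1) by (auto simp: tr_def)
  then show ?thesis using cr Sw_ext[OF cr(1)] Sw_ext[of "tr a b c" a b u] by (simp add: comp_def)
qed (simp add: Sw_def)

lemma Sw_adj_snoc:
  assumes w: "w \<in> tree_vertices d" and wx: "w @ [x] \<in> tree_vertices d"
  shows "tree_adj d (Sw u a b w) (Sw u a b (w @ [x]))"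
proof -
  have V: "Sw u a b w \<in> tree_vertices d" "Sw u a b (w @ [x]) \<in> tree_vertices d"
    using Sw_V w wx by auto
  consider (inn) "prefix (u @ [a]) w \<or> prefix (u @ [b]) w"
    | (eq) c where "c \<in> {a, b}" "w @ [x] = u @ [c]"
    | (out) "\<not> (prefix (u @ [a]) (w @ [x]) \<or> prefix (u @ [b]) (w @ [x]))"
    by (auto simp: prefix_snoc)
  then show ?thesis
  proof cases
    case inn
    then obtain c r where cr: "c \<in> {a, b}" "w = u @ c # r" by (auto dest: prefix_ext)
    then have "Sw u a b (w @ [x]) = Sw u a b w @ [tr a b x]"
      using Sw_ext[OF cr(1), of u] Sw_ext[OF cr(1), of u "r @ [x]"] by simp
    then show ?thesis using V by (auto simp: tree_adj_def)
  next
    case eq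
    then have "w = u" "x = c" by auto
    then have "Sw u a b w = u" by (simp add: Sw_def prefix_def)
    moreover have "Sw u a b (w @ [x]) = u @ [tr a b c]"
      using Sw_ext[OF eq(1), of u "[]"] \<open>w = u\<close> \<open>x = c\<close> by simp
    ultimately show ?thesis using V by (auto simp: tree_adj_def)
  next
    case out
    then have "\<not> (prefix (u @ [a]) w \<or> prefix (u @ [b]) w)"
      by (auto simp: prefix_snoc)
    then have "Sw u a b w = w" using Sw_fix by blast
    moreover have "Sw u a b (w @ [x]) = w @ [x]" using out Sw_fix by blast
    ultimately show ?thesis using w wx by (auto simp: tree_adj_def)
  qed
qed

lemma Sw_aut: "tree_aut d (Sw u a b)"
proof (rule aut_by_involution)
  fix v w assume vw: "v \<in> tree_vertices d" "w \<in> tree_vertices d" "tree_adj d v w"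
  then consider x where "w = v @ [x]" | x where "v = w @ [x]" by (auto simp: tree_adj_def)
  then show "tree_adj d (Sw u a b v) (Sw u a b w)"
  proof cases
    case 1 then show ?thesis using Sw_adj_snoc vw by auto
  next
    case 2 then show ?thesis using Sw_adj_snoc[of w x] vw by (simp add: adj_sym)
  qed
qed (auto simp: Sw_V Sw_Sw)

end


locale evp =
  fixes d :: nat and l :: real and M :: "'a measure" and X :: "nat list \<Rightarrow> 'a \<Rightarrow> real"
  assumes ev: "eigenvector_process d l M X" and d3: "d \<ge> 3" and ld: "\<bar>l\<bar> < real d"
begin

abbreviation "V \<equiv> tree_vertices d"
abbreviation "P \<equiv> PiM (tree_vertices d) (\<lambda>_. borel :: real measure)"

lemma prob: "prob_space M" using ev by (simp add: eigenvector_process_def)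

sublocale prob_space M by (rule prob)

lemma meas[measurable]: "u \<in> V \<Longrightarrow> X u \<in> borel_measurable M"
  using ev by (simp add: eigenvector_process_def)

lemma sq_int: "u \<in> V \<Longrightarrow> integrable M (\<lambda>\<omega>. (X u \<omega>)\<^sup>2)"
  using ev by (simp add: eigenvector_process_def)

lemma var1: "u \<in> V \<Longrightarrow> (\<integral>\<omega>. (X u \<omega> - (\<integral>\<omega>'. X u \<omega>' \<partial>M))\<^sup>2 \<partial>M) = 1"
  using ev by (simp add: eigenvector_process_def)

lemma int_X: "u \<in> V \<Longrightarrow> integrable M (X u)"
  using square_integrable_imp_integrable[OF meas sq_int] by simp

lemma int_prod: assumes "u \<in> V" "v \<in> V" shows "integrable M (\<lambda>\<omega>. X u \<omega> * X v \<omega>)"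
proof (rule Bochner_Integration.integrable_bound)
  show "integrable M (\<lambda>\<omega>. (X u \<omega>)\<^sup>2 + (X v \<omega>)\<^sup>2)" using sq_int assms by auto
  show "(\<lambda>\<omega>. X u \<omega> * X v \<omega>) \<in> borel_measurable M" using assms by measurable
  show "AE \<omega> in M. norm (X u \<omega> * X v \<omega>) \<le> norm ((X u \<omega>)\<^sup>2 + (X v \<omega>)\<^sup>2)"
  proof (rule AE_I2)
    fix \<omega>
    have "\<bar>x * y\<bar> \<le> x\<^sup>2 + y\<^sup>2" for x y :: real
    proof -
      have "0 \<le> (\<bar>x\<bar> - \<bar>y\<bar>)\<^sup>2" by simp
      then have "2 * (\<bar>x\<bar> * \<bar>y\<bar>) \<le> x\<^sup>2 + y\<^sup>2"
        by (simp add: power2_eq_square algebra_simps abs_mult_self_eq)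
      moreover have "0 \<le> \<bar>x\<bar> * \<bar>y\<bar>" by simp
      ultimately show ?thesis unfolding abs_mult by linarith
    qed
    then have "\<bar>X u \<omega> * X v \<omega>\<bar> \<le> (X u \<omega>)\<^sup>2 + (X v \<omega>)\<^sup>2" .
    then show "norm (X u \<omega> * X v \<omega>) \<le> norm ((X u \<omega>)\<^sup>2 + (X v \<omega>)\<^sup>2)" by simp
  qed
qed

definition Cv :: "nat list \<Rightarrow> nat list \<Rightarrow> real" where
  "Cv u v = (\<integral>\<omega>. X u \<omega> * X v \<omega> \<partial>M)"

lemma Cv_sym: "Cv u v = Cv v u" by (simp add: Cv_def mult.commute)

definition Phi :: "(nat list \<Rightarrow> nat list) \<Rightarrow> 'a \<Rightarrow> nat list \<Rightarrow> real" where
  "Phi \<phi> \<omega> = (\<lambda>u\<in>V. X (\<phi> u) \<omega>)"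

lemma Phi_meas: "tree_aut d \<phi> \<Longrightarrow> Phi \<phi> \<in> measurable M P"
  unfolding Phi_def by (rule measurable_restrict) (auto intro: meas aut_V)

lemma Phi_id_meas: "(\<lambda>\<omega>. \<lambda>u\<in>V. X u \<omega>) \<in> measurable M P"
  by (rule measurable_restrict) (auto intro: meas)

lemma distr_inv: "tree_aut d \<phi> \<Longrightarrow> distr M P (Phi \<phi>) = distr M P (\<lambda>\<omega>. \<lambda>u\<in>V. X u \<omega>)"
  using ev unfolding eigenvector_process_def Phi_def by blast

lemma integral_inv:
  fixes g :: "(nat list \<Rightarrow> real) \<Rightarrow> real"
  assumes "tree_aut d \<phi>" "g \<in> borel_measurable P"
  shows "(\<integral>\<omega>. g (Phi \<phi> \<omega>) \<partial>M) = (\<integral>\<omega>. g (\<lambda>u\<in>V. X u \<omega>) \<partial>M)"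
proof -
  have "(\<integral>\<omega>. g (Phi \<phi> \<omega>) \<partial>M) = integral\<^sup>L (distr M P (Phi \<phi>)) g"
    by (rule integral_distr[of "Phi \<phi>" M P g, symmetric]) (use assms Phi_meas in auto)
  also have "\<dots> = integral\<^sup>L (distr M P (\<lambda>\<omega>. \<lambda>u\<in>V. X u \<omega>)) g"
    using distr_inv[OF assms(1)] by simp
  also have "\<dots> = (\<integral>\<omega>. g (\<lambda>u\<in>V. X u \<omega>) \<partial>M)"
    by (rule integral_distr[of "\<lambda>\<omega>. \<lambda>u\<in>V. X u \<omega>" M P g]) (use assms Phi_id_meas in auto)
  finally show ?thesis .
qed

lemma AE_inv:
  assumes "tree_aut d \<phi>" "{x \<in> space P. Q x} \<in> sets P" "AE \<omega> in M. Q (\<lambda>u\<in>V. X u \<omega>)"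
  shows "AE \<omega> in M. Q (Phi \<phi> \<omega>)"
proof -
  have "AE x in distr M P (\<lambda>\<omega>. \<lambda>u\<in>V. X u \<omega>). Q x"
    using assms(3) by (subst AE_distr_iff[OF Phi_id_meas assms(2)])
  then have "AE x in distr M P (Phi \<phi>). Q x" by (subst distr_inv[OF assms(1)])
  then show ?thesis by (subst (asm) AE_distr_iff[OF Phi_meas[OF assms(1)] assms(2)])
qed

lemma Cv_inv:
  assumes "tree_aut d \<phi>" "u \<in> V" "v \<in> V"
  shows "Cv (\<phi> u) (\<phi> v) = Cv u v"
proof -
  have g: "(\<lambda>x. x u * x v) \<in> borel_measurable P" using assms(2,3) by measurable
  have "(\<integral>\<omega>. (\<lambda>x. x u * x v) (Phi \<phi> \<omega>) \<partial>M) = (\<integral>\<omega>. (\<lambda>x. x u * x v) (\<lambda>u\<in>V. X u \<omega>) \<partial>M)"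
    by (rule integral_inv[OF assms(1) g])
  then show ?thesis using assms(2,3) by (simp add: Phi_def Cv_def)
qed

lemma eigen_root: "AE \<omega> in M. (\<Sum>w\<in>tree_nbrs d []. X w \<omega>) = l * X [] \<omega>"
  using ev by (simp add: eigenvector_process_def tree_root_def)

lemma eigen_AE:
  assumes u: "u \<in> V"
  shows "AE \<omega> in M. (\<Sum>w\<in>tree_nbrs d u. X w \<omega>) = l * X u \<omega>"
proof -
  obtain \<phi> where \<phi>: "tree_aut d \<phi>" "\<phi> [] = u" using aut_transitive[OF u] by blast
  define Q where "Q x = ((\<Sum>w\<in>tree_nbrs d []. x w) = l * (x [] :: real))" for x :: "nat list \<Rightarrow> real"
  have NV: "tree_nbrs d [] \<subseteq> V" using nbrs_V by blast
  have sets: "{x \<in> space P. Q x} \<in> sets P"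
    unfolding Q_def
  proof (rule measurable_equality_set)
    show "(\<lambda>x. \<Sum>w\<in>tree_nbrs d []. x w) \<in> borel_measurable P"
      using NV by (intro borel_measurable_sum) (auto intro: measurable_component_singleton)
    show "(\<lambda>x. l * x []) \<in> borel_measurable P" by measurable
  qed
  have "AE \<omega> in M. Q (\<lambda>u\<in>V. X u \<omega>)"
    using eigen_root NV by (auto simp: Q_def subset_iff elim!: AE_mp intro!: AE_I2)
  then have "AE \<omega> in M. Q (Phi \<phi> \<omega>)" using AE_inv[OF \<phi>(1) sets] by blast
  moreover have "Q (Phi \<phi> \<omega>) \<longleftrightarrow> (\<Sum>w\<in>tree_nbrs d u. X w \<omega>) = l * X u \<omega>" for \<omega>
  proof -
    have "(\<Sum>w\<in>tree_nbrs d u. X w \<omega>) = (\<Sum>w\<in>\<phi> ` tree_nbrs d []. X w \<omega>)"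
      using aut_nbrs[OF \<phi>(1), of "[]"] \<phi>(2) by simp
    also have "\<dots> = (\<Sum>w\<in>tree_nbrs d []. X (\<phi> w) \<omega>)"
      by (rule sum.reindex[unfolded comp_def]) (use aut_inj[OF \<phi>(1)] NV in \<open>auto intro: inj_on_subset\<close>)
    finally show ?thesis using NV \<phi>(2) by (auto simp: Q_def Phi_def subset_iff intro!: sum.cong)
  qed
  ultimately show ?thesis by simp
qed

lemma C5:
  assumes u: "u \<in> V" and v: "v \<in> V"
  shows "(\<Sum>w\<in>tree_nbrs d u. Cv w v) = l * Cv u v"
proof -
  have NV: "tree_nbrs d u \<subseteq> V" using nbrs_V by blast
  have "(\<Sum>w\<in>tree_nbrs d u. Cv w v) = (\<integral>\<omega>. (\<Sum>w\<in>tree_nbrs d u. X w \<omega> * X v \<omega>) \<partial>M)"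
    unfolding Cv_def by (rule Bochner_Integration.integral_sum[where f="\<lambda>w \<omega>. X w \<omega> * X v \<omega>", symmetric]) (use NV v int_prod in auto)
  also have "\<dots> = (\<integral>\<omega>. l * (X u \<omega> * X v \<omega>) \<partial>M)"
  proof (rule integral_cong_AE)
    show "(\<lambda>\<omega>. \<Sum>w\<in>tree_nbrs d u. X w \<omega> * X v \<omega>) \<in> borel_measurable M"
      using NV v by (auto intro!: borel_measurable_sum borel_measurable_times meas)
    show "(\<lambda>\<omega>. l * (X u \<omega> * X v \<omega>)) \<in> borel_measurable M" using u v by measurable
    show "AE \<omega> in M. (\<Sum>w\<in>tree_nbrs d u. X w \<omega> * X v \<omega>) = l * (X u \<omega> * X v \<omega>)"
      using eigen_AE[OF u]
    proof eventually_elim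
      case (elim \<omega>) then show ?case by (simp add: sum_distrib_right[symmetric])
    qed
  qed
  also have "\<dots> = l * Cv u v" by (simp add: Cv_def)
  finally show ?thesis .
qed

end


context evp begin

abbreviation "s \<equiv> Cv [] []"
abbreviation "t \<equiv> Cv [] [0]"
abbreviation "r \<equiv> Cv [0] [1]"

lemma Cv_diag: "u \<in> V \<Longrightarrow> Cv u u = s"
  using aut_transitive[of u d] Cv_inv[of _ "[]" "[]"] by force

lemma s_pos: "s > 0"
proof -
  have int: "integrable M (\<lambda>\<omega>. X [] \<omega> * X [] \<omega>)" using int_prod by simp
  have nn: "s \<ge> 0" unfolding Cv_def by (rule integral_nonneg_AE) auto
  moreover have "s \<noteq> 0"
  proof
    assume "s = 0"
    then have "AE \<omega> in M. X [] \<omega> * X [] \<omega> = 0"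
      using integral_nonneg_eq_0_iff_AE[OF int] by (simp add: Cv_def)
    then have ae: "AE \<omega> in M. X [] \<omega> = 0" by simp
    have "(\<integral>\<omega>. X [] \<omega> \<partial>M) = (\<integral>\<omega>. 0 \<partial>M)"
    proof (rule integral_cong_AE)
      show "X [] \<in> borel_measurable M" by measurable
      show "AE \<omega> in M. X [] \<omega> = 0" by (rule ae)
    qed simp
    then have m: "(\<integral>\<omega>. X [] \<omega> \<partial>M) = 0" by simp
    have "(\<integral>\<omega>. (X [] \<omega> - (\<integral>\<omega>'. X [] \<omega>' \<partial>M))\<^sup>2 \<partial>M) = (\<integral>\<omega>. 0 \<partial>M)"
    proof (rule integral_cong_AE)
      show "(\<lambda>\<omega>. (X [] \<omega> - (\<integral>\<omega>'. X [] \<omega>' \<partial>M))\<^sup>2) \<in> borel_measurable M" by measurable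
      show "AE \<omega> in M. (X [] \<omega> - (\<integral>\<omega>'. X [] \<omega>' \<partial>M))\<^sup>2 = 0"
        using ae by eventually_elim (simp add: m)
    qed simp
    then show False using var1[of "[]"] by simp
  qed
  ultimately show ?thesis by simp
qed

lemma Sw_aut_root: "a < d \<Longrightarrow> b < d \<Longrightarrow> a \<noteq> b \<Longrightarrow> tree_aut d (Sw [] a b)"
  using Sw_aut[of "[]" a d b] by simp

lemma Cv_root_nb: assumes "a < d" shows "Cv [] [a] = t"
proof (cases "a = 0")
  case False
  have "Cv (Sw [] 0 a []) (Sw [] 0 a [0]) = Cv [] [0]"
    by (rule Cv_inv) (use Sw_aut_root[of 0 a] assms False d3 in auto)
  moreover have "Sw [] 0 a [] = []" by (simp add: Sw_def)
  moreover have "Sw [] 0 a [0] = [a]" using Sw_child[of "[]" 0 a] by simp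
  ultimately show ?thesis by simp
qed simp

lemma nbrs_root: "tree_nbrs d [] = (\<lambda>a. [a]) ` {..<d}"
  by (auto simp: nbrs_eq)

lemma sum_nbrs_root: "(\<Sum>w\<in>tree_nbrs d []. f w) = (\<Sum>a<d. f [a])"
  unfolding nbrs_root by (subst sum.reindex) (auto simp: inj_on_def)

lemma dt: "real d * t = l * s"
proof -
  have "(\<Sum>w\<in>tree_nbrs d []. Cv w []) = l * s" using C5[of "[]" "[]"] by simp
  moreover have "(\<Sum>w\<in>tree_nbrs d []. Cv w []) = (\<Sum>a<d. t)"
    unfolding sum_nbrs_root
  proof (rule sum.cong)
    fix a assume "a \<in> {..<d}"
    then show "Cv [a] [] = t" using Cv_sym[of "[a]" "[]"] Cv_root_nb[of a] by simp
  qed simp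
  ultimately show ?thesis by simp
qed

lemma Cv_nb_aux: assumes "a < d" "b < d" "c < d" "b \<noteq> a" "c \<noteq> a" shows "Cv [a] [b] = Cv [a] [c]"
proof (cases "b = c")
  case False
  have "Cv (Sw [] b c [a]) (Sw [] b c [b]) = Cv [a] [b]"
    by (rule Cv_inv) (use Sw_aut_root[of b c] assms False in auto)
  moreover have "Sw [] b c [a] = [a]" using assms by (simp add: Sw_def)
  moreover have "Sw [] b c [b] = [c]" using Sw_child[of "[]" b c] by simp
  ultimately show ?thesis by simp
qed simp

lemma Cv_nb_nb: assumes "a < d" "b < d" "a \<noteq> b" shows "Cv [a] [b] = r"
proof (cases "a = 0")
  case True then show ?thesis using Cv_nb_aux[of 0 b 1] assms d3 by simp
next
  case False
  have "Cv [a] [b] = Cv [a] [0]" using Cv_nb_aux[of a b 0] assms False by simp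
  also have "\<dots> = Cv [0] [a]" by (rule Cv_sym)
  also have "\<dots> = r" using Cv_nb_aux[of 0 a 1] assms False d3 by simp
  finally show ?thesis .
qed

lemma sr: "s + (real d - 1) * r = l * t"
proof -
  have 1: "(\<Sum>a<d. Cv [a] [0]) = l * t" using C5[of "[]" "[0]"] d3 by (simp add: sum_nbrs_root)
  have 2: "(\<Sum>a<d. Cv [a] [0]) = Cv [0] [0] + (\<Sum>a\<in>{..<d} - {0}. Cv [a] [0])"
    using d3 by (subst sum.remove[of _ 0]) auto
  have 3: "(\<Sum>a\<in>{..<d} - {0}. Cv [a] [0]) = (\<Sum>a\<in>{..<d} - {0}. r)"
  proof (rule sum.cong)
    fix a assume a: "a \<in> {..<d} - {0}"
    show "Cv [a] [0] = r" by (rule Cv_nb_nb) (use a d3 in auto)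
  qed simp
  have 4: "Cv [0] [0] = s" using Cv_diag[of "[0]"] d3 by simp
  have 5: "(\<Sum>a\<in>{..<d} - {0}. r) = real (d - 1) * r" using d3 by simp
  have 6: "real (d - 1) = real d - 1" using d3 by (simp add: of_nat_diff)
  have 7: "(\<Sum>a\<in>{..<d} - {0}. r) = (real d - 1) * r" using 5 6 by simp
  have "l * t = (\<Sum>a<d. Cv [a] [0])" using 1 by simp
  also have "\<dots> = Cv [0] [0] + (\<Sum>a\<in>{..<d} - {0}. Cv [a] [0])" by (rule 2)
  also have "\<dots> = s + (real d - 1) * r" by (simp only: 3 4 7)
  finally show ?thesis by simp
qed

lemma s_minus_r: "s - r > 0"
proof -
  have e1: "(real d - 1) * r = l * t - s" using sr by linarith
  have e2: "real d * t = l * s" by (rule dt)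
  have A: "real d * (real d - 1) * (s - r) = ((real d)\<^sup>2 - l\<^sup>2) * s"
  proof -
    have "real d * (real d - 1) * (s - r) = real d * (real d - 1) * s - real d * ((real d - 1) * r)"
      by (simp add: algebra_simps)
    also have "\<dots> = real d * (real d - 1) * s - real d * (l * t - s)" by (simp only: e1)
    also have "\<dots> = real d * (real d - 1) * s - l * (real d * t) + real d * s"
      by (simp only: right_diff_distrib mult.left_commute diff_diff_eq2)
    also have "\<dots> = real d * (real d - 1) * s - l * (l * s) + real d * s" by (simp only: e2)
    also have "\<dots> = ((real d)\<^sup>2 - l\<^sup>2) * s"
      by (simp add: power2_eq_square algebra_simps)
    finally show ?thesis .
  qed
  have "\<bar>l\<bar> * \<bar>l\<bar> < real d * real d" by (rule mult_strict_mono) (use ld in auto)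
  then have B: "0 < (real d)\<^sup>2 - l\<^sup>2" by (simp add: power2_eq_square abs_mult_self_eq)
  have C: "0 < ((real d)\<^sup>2 - l\<^sup>2) * s" using B s_pos by (rule mult_pos_pos)
  have D: "0 < real d * (real d - 1)" using d3 by simp
  have "0 < real d * (real d - 1) * (s - r)" using A C by simp
  then show ?thesis using D zero_less_mult_pos by blast
qed

lemma Cv_sib:
  assumes u: "u \<in> V" and w: "w \<in> tree_nbrs d u" "w' \<in> tree_nbrs d u" "w \<noteq> w'"
  shows "Cv w w' = r"
proof -
  obtain \<phi> where \<phi>: "tree_aut d \<phi>" "\<phi> [] = u" using aut_transitive[OF u] by blast
  have N: "tree_nbrs d u = \<phi> ` tree_nbrs d []" using aut_nbrs[OF \<phi>(1), of "[]"] \<phi>(2) by simp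
  obtain x where x: "x \<in> tree_nbrs d []" "w = \<phi> x" using w(1) unfolding N by (rule imageE)
  obtain y where y: "y \<in> tree_nbrs d []" "w' = \<phi> y" using w(2) unfolding N by (rule imageE)
  have "x \<in> (\<lambda>a. [a]) ` {..<d}" using x(1) unfolding nbrs_root .
  then obtain a where a: "a \<in> {..<d}" "x = [a]" by (rule imageE)
  have "y \<in> (\<lambda>a. [a]) ` {..<d}" using y(1) unfolding nbrs_root .
  then obtain b where b: "b \<in> {..<d}" "y = [b]" by (rule imageE)
  have "a \<noteq> b" using w(3) x(2) y(2) a(2) b(2) by blast
  have "Cv w w' = Cv (\<phi> [a]) (\<phi> [b])" by (simp only: x(2) y(2) a(2) b(2))
  also have "\<dots> = Cv [a] [b]" by (rule Cv_inv[OF \<phi>(1)]) (use a(1) b(1) in simp_all)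
  also have "\<dots> = r" by (rule Cv_nb_nb) (use a(1) b(1) \<open>a \<noteq> b\<close> in simp_all)
  finally show ?thesis .
qed

lemma Cv_swap:
  assumes "u @ [a] \<in> V" "u @ [b] \<in> V" "a \<noteq> b" "z \<in> V"
    "\<not> prefix (u @ [a]) z" "\<not> prefix (u @ [b]) z"
  shows "Cv z (u @ [a]) = Cv z (u @ [b])"
proof -
  have aut: "tree_aut d (Sw u a b)" using assms(1-3) by (rule Sw_aut)
  have "Cv (Sw u a b z) (Sw u a b (u @ [a])) = Cv z (u @ [a])"
    using Cv_inv[OF aut assms(4) assms(1)] .
  then show ?thesis using Sw_fix[OF assms(5,6)] Sw_child by simp
qed

end


definition Ch :: "nat \<Rightarrow> bool \<Rightarrow> nat list \<Rightarrow> nat list set" where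
  "Ch d e u = {w \<in> tree_nbrs d u. dp e w = Suc (dp e u)}"

lemma dp_ge: "length w \<le> Suc (dp e w)"
  by (simp add: dp_def)

lemma finite_Sset: "finite {w \<in> tree_vertices d. dp e w \<le> K}"
proof (rule finite_subset)
  show "{w \<in> tree_vertices d. dp e w \<le> K} \<subseteq> {xs. set xs \<subseteq> {..<d} \<and> length xs \<le> Suc K}"
    using dp_ge[of _ e] by (auto simp: V_iff intro: le_trans)
  show "finite {xs. set xs \<subseteq> {..<d} \<and> length xs \<le> Suc K}"
    by (rule finite_lists_length_le) simp
qed

lemma dp_butlast_le': "dp e (butlast u) \<le> dp e u"
proof (cases "dp e u = 0")
  case False then show ?thesis using dp_butlast[OF False] by simp
next
  case True
  then have "u = [] \<or> (e \<and> length u = 1)" by (cases u) (auto simp: dp_def split: if_splits)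
  then show ?thesis
  proof
    assume "e \<and> length u = 1"
    then have "butlast u = []" by (cases u) auto
    then show ?thesis by simp
  qed simp
qed

lemma Ch_form: assumes "u \<in> tree_vertices d" "w \<in> Ch d e u" shows "\<exists>c. w = u @ [c]"
proof -
  have "w \<in> tree_nbrs d u" "dp e w = Suc (dp e u)" using assms(2) by (auto simp: Ch_def)
  moreover have "dp e (butlast u) \<noteq> Suc (dp e u)" using dp_butlast_le'[of e u] by simp
  ultimately show ?thesis using assms(1) by (auto simp: nbrs_eq split: if_splits)
qed

lemma Ch_butlast: "u \<in> tree_vertices d \<Longrightarrow> w \<in> Ch d e u \<Longrightarrow> butlast w = u"
  using Ch_form by fastforce

lemma Ch_V: "w \<in> Ch d e u \<Longrightarrow> w \<in> tree_vertices d"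
  by (auto simp: Ch_def intro: nbrs_V)

lemma Ch_nbrs: "Ch d e u \<subseteq> tree_nbrs d u"
  by (auto simp: Ch_def)

lemma finite_Ch[simp]: "finite (Ch d e u)"
  by (rule finite_subset[OF Ch_nbrs]) simp

lemma Ch_dp: "w \<in> Ch d e u \<Longrightarrow> dp e w = Suc (dp e u)"
  by (simp add: Ch_def)

lemma parent_Ch:
  assumes w: "w \<in> tree_vertices d" and nz: "dp e w \<noteq> 0"
  shows "butlast w \<in> tree_vertices d" "w \<in> Ch d e (butlast w)" "dp e w = Suc (dp e (butlast w))"
proof -
  show bV: "butlast w \<in> tree_vertices d" using V_butlast[OF w] .
  show dpw: "dp e w = Suc (dp e (butlast w))" using dp_butlast[OF nz] .
  have "w \<noteq> []" using nz by auto
  then have "w = butlast w @ [last w]" by simp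
  then have "tree_adj d (butlast w) w" using w bV unfolding tree_adj_def by blast
  then show "w \<in> Ch d e (butlast w)" unfolding Ch_def tree_nbrs_def using dpw by blast
qed

lemma nbrs_notCh_dp:
  "w \<in> tree_nbrs d u - Ch d e u \<Longrightarrow> dp e w \<le> dp e u"
  using dp_adj[of d u w e] by (auto simp: Ch_def tree_nbrs_def)

lemma dp_prefix: "prefix v z \<Longrightarrow> dp e v \<le> dp e z"
proof -
  assume "prefix v z"
  then obtain q where z: "z = v @ q" by (auto simp: prefix_def)
  show ?thesis
  proof (cases v)
    case Nil then show ?thesis by simp
  next
    case (Cons a v') then show ?thesis using z by (simp add: dp_def)
  qed
qed

lemma Ch_nonempty:
  assumes "u \<in> tree_vertices d" "d \<ge> 3"
  shows "Ch d e u \<noteq> {}"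
proof -
  define c where "c = (if u \<noteq> [] \<and> last u = 1 then 2 else (1::nat))"
  have c: "c \<in> {1, 2::nat}" "u = [] \<or> last u \<noteq> c" unfolding c_def by auto
  then have "c < d" "c \<noteq> 0" using assms by auto
  then have uc: "u @ [c] \<in> tree_vertices d" using assms c by (simp add: V_snoc)
  then have "tree_adj d u (u @ [c])" using assms by (auto simp: tree_adj_def)
  moreover have "dp e (u @ [c]) = Suc (dp e u)" using \<open>c \<noteq> 0\<close> by (simp add: dp_snoc)
  ultimately have "u @ [c] \<in> Ch d e u" by (simp add: Ch_def tree_nbrs_def)
  then show ?thesis by blast
qed


definition Sset :: "nat \<Rightarrow> bool \<Rightarrow> nat \<Rightarrow> nat list set" where
  "Sset d e K = {w \<in> tree_vertices d. dp e w \<le> K}"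
definition Iset :: "nat \<Rightarrow> bool \<Rightarrow> nat \<Rightarrow> nat list set" where
  "Iset d e K = {w \<in> tree_vertices d. dp e w < K}"
definition Bset :: "nat \<Rightarrow> bool \<Rightarrow> nat list set" where
  "Bset d e = {w \<in> tree_vertices d. dp e w = 0}"

lemma Bset_eq: assumes "d \<ge> 1" shows "Bset d e = (if e then {[], [0]} else {[]})"
proof -
  have "w \<in> Bset d e \<longleftrightarrow> w \<in> (if e then {[], [0]} else {[]})" for w
  proof (cases w)
    case Nil then show ?thesis by (simp add: Bset_def)
  next
    case (Cons a w')
    then show ?thesis using assms by (cases w') (auto simp: Bset_def dp_def)
  qed
  then show ?thesis by blast
qed

lemma finite_Iset: "finite (Iset d e K)"
  by (rule finite_subset[OF _ finite_Sset[of d e K]]) (auto simp: Iset_def)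

lemma Iset_Sset: "Iset d e K \<subseteq> Sset d e K"
  by (auto simp: Iset_def Sset_def)

lemma Bset_Sset: "Bset d e \<subseteq> Sset d e K"
  by (auto simp: Bset_def Sset_def)

lemma Ch_Sset: "u \<in> Iset d e K \<Longrightarrow> Ch d e u \<subseteq> Sset d e K"
  by (auto simp: Iset_def Sset_def Ch_dp intro: Ch_V)

lemma nbrs_Sset: assumes "u \<in> Iset d e K" shows "tree_nbrs d u \<subseteq> Sset d e K"
proof
  fix w assume w: "w \<in> tree_nbrs d u"
  then have "tree_adj d u w" by (simp add: tree_nbrs_def)
  then have "dp e w \<le> Suc (dp e u)" by (rule dp_adj)
  moreover have "dp e u < K" using assms by (simp add: Iset_def)
  moreover have "w \<in> tree_vertices d" using w by (rule nbrs_V)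
  ultimately show "w \<in> Sset d e K" by (simp add: Sset_def)
qed

lemma matching:
  fixes F G :: "nat list \<Rightarrow> real"
  assumes F: "\<And>u. u \<in> Iset d e K \<Longrightarrow> l * F u = (\<Sum>w\<in>tree_nbrs d u. F w)"
    and G: "\<And>u. u \<in> Iset d e K \<Longrightarrow> l * G u = (\<Sum>w\<in>tree_nbrs d u. G w)"
    and B: "\<And>b. b \<in> Bset d e \<Longrightarrow> F b = G b"
    and D: "\<And>u v1 v2. u \<in> Iset d e K \<Longrightarrow> v1 \<in> Ch d e u \<Longrightarrow> v2 \<in> Ch d e u \<Longrightarrow> F v1 - F v2 = G v1 - G v2"
  shows "\<And>x. x \<in> Sset d e K \<Longrightarrow> F x = G x"
proof -
  have "\<forall>x\<in>tree_vertices d. dp e x \<le> n \<longrightarrow> dp e x \<le> K \<longrightarrow> F x = G x" for n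
  proof (induction n)
    case 0 then show ?case using B by (auto simp: Bset_def)
  next
    case (Suc n)
    show ?case
    proof (intro ballI impI)
      fix x assume x: "x \<in> tree_vertices d" "dp e x \<le> Suc n" "dp e x \<le> K"
      show "F x = G x"
      proof (cases "dp e x \<le> n")
        case True then show ?thesis using Suc.IH x by blast
      next
        case False
        then have dx: "dp e x = Suc n" using x by simp
        define u where "u = butlast x"
        have uV: "u \<in> tree_vertices d" and xCh: "x \<in> Ch d e u" and du: "dp e x = Suc (dp e u)"
          using parent_Ch[OF x(1), of e] dx by (auto simp: u_def)
        have duN: "dp e u = n" using du dx by simp
        have uI: "u \<in> Iset d e K" using uV duN x(3) dx by (simp add: Iset_def)
        have Fu: "F u = G u" using Suc.IH uV duN x(3) dx by simp
        have rest: "F w = G w" if w: "w \<in> tree_nbrs d u - Ch d e u" for w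
        proof -
          have "dp e w \<le> n" using nbrs_notCh_dp[OF w] duN by simp
          moreover have "w \<in> tree_vertices d" using w nbrs_V by blast
          ultimately show ?thesis using Suc.IH x(3) dx by simp
        qed
        have sub: "Ch d e u \<subseteq> tree_nbrs d u" by (rule Ch_nbrs)
        have split: "(\<Sum>w\<in>tree_nbrs d u. H w) = (\<Sum>w\<in>tree_nbrs d u - Ch d e u. H w) + (\<Sum>w\<in>Ch d e u. H w)"
          for H :: "nat list \<Rightarrow> real"
          by (rule sum.subset_diff[OF sub finite_nbrs])
        have "(\<Sum>w\<in>Ch d e u. F w) = l * F u - (\<Sum>w\<in>tree_nbrs d u - Ch d e u. F w)"
          using F[OF uI] split[of F] by simp
        also have "\<dots> = l * G u - (\<Sum>w\<in>tree_nbrs d u - Ch d e u. G w)"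
        proof -
          have "(\<Sum>w\<in>tree_nbrs d u - Ch d e u. F w) = (\<Sum>w\<in>tree_nbrs d u - Ch d e u. G w)"
            by (rule sum.cong) (use rest in auto)
          then show ?thesis using Fu by simp
        qed
        also have "\<dots> = (\<Sum>w\<in>Ch d e u. G w)"
          using G[OF uI] split[of G] by simp
        finally have eqs: "(\<Sum>w\<in>Ch d e u. F w) = (\<Sum>w\<in>Ch d e u. G w)" .
        have decomp: "(\<Sum>w\<in>Ch d e u. H w) = real (card (Ch d e u)) * H x + (\<Sum>w\<in>Ch d e u. H w - H x)"
          for H :: "nat list \<Rightarrow> real"
          by (simp add: sum_subtractf)
        have "(\<Sum>w\<in>Ch d e u. F w - F x) = (\<Sum>w\<in>Ch d e u. G w - G x)"
          using D[OF uI _ xCh] by (simp cong: sum.cong)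
        then have "real (card (Ch d e u)) * F x = real (card (Ch d e u)) * G x"
          using eqs decomp[of F] decomp[of G] by simp
        moreover have "card (Ch d e u) \<noteq> 0" using xCh by (auto simp: card_eq_0_iff)
        ultimately show ?thesis by simp
      qed
    qed
  qed
  then show "\<And>x. x \<in> Sset d e K \<Longrightarrow> F x = G x" by (auto simp: Sset_def)
qed


context evp begin

lemma Cv_const_block:
  assumes u: "u \<in> V" and z: "z \<in> V" and v: "v \<in> Ch d e u" "v' \<in> Ch d e u"
    and np: "\<not> prefix v z" "\<not> prefix v' z"
  shows "Cv z v = Cv z v'"
proof -
  obtain a where a: "v = u @ [a]" using Ch_form[OF u v(1)] by blast
  obtain b where b: "v' = u @ [b]" using Ch_form[OF u v(2)] by blast
  show ?thesis
  proof (cases "a = b")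
    case True then show ?thesis using a b by simp
  next
    case False
    have "u @ [a] \<in> V" "u @ [b] \<in> V" using Ch_V v a b by auto
    then show ?thesis using Cv_swap[of u a b z] False z np a b by simp
  qed
qed

lemma alpha_exists:
  fixes f :: "nat list \<Rightarrow> real"
  shows "\<exists>\<alpha>. \<forall>b\<in>Bset d e. (\<Sum>v\<in>Bset d e. \<alpha> v * Cv b v) = f b"
proof (cases e)
  case False
  then have B: "Bset d e = {[]}" using Bset_eq[of d e] d3 by simp
  have "(\<Sum>v\<in>{[]::nat list}. f [] / s * Cv [] v) = f []" using s_pos by simp
  then show ?thesis unfolding B by (intro exI[of _ "\<lambda>v. f [] / s"]) simp
next
  case True
  then have B: "Bset d e = {[], [0]}" using Bset_eq[of d e] d3 by simp
  have t: "t = l * s / real d" using dt d3 by (simp add: field_simps)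
  have "\<bar>t\<bar> < s"
  proof -
    have "\<bar>t\<bar> = \<bar>l\<bar> * s / real d" using t s_pos d3 by (simp add: abs_mult)
    also have "\<dots> < real d * s / real d"
    proof (rule divide_strict_right_mono)
      show "\<bar>l\<bar> * s < real d * s" using ld s_pos by (rule mult_strict_right_mono)
      show "0 < real d" using d3 by simp
    qed
    also have "\<dots> = s" using d3 by simp
    finally show ?thesis .
  qed
  then have "\<bar>t\<bar> * \<bar>t\<bar> < s * s" by (intro mult_strict_mono) auto
  then have Dpos: "s * s - t * t > 0" by (simp add: abs_mult_self_eq)
  define D where "D = s * s - t * t"
  define \<alpha> where "\<alpha> v = (if v = [] then (s * f [] - t * f [0]) / D else (s * f [0] - t * f []) / D)" for v :: "nat list"
  have c00: "Cv [0] [0] = s" using Cv_diag[of "[0]"] d3 by simp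
  have c10: "Cv [0] [] = t" using Cv_sym[of "[0]" "[]"] by simp
  have "(\<Sum>v\<in>{[], [0]}. \<alpha> v * Cv [] v) = f []"
  proof -
    have "(\<Sum>v\<in>{[], [0]}. \<alpha> v * Cv [] v) = \<alpha> [] * s + \<alpha> [0] * t" by simp
    also have "\<dots> = ((s * f [] - t * f [0]) * s + (s * f [0] - t * f []) * t) / D"
      by (simp add: \<alpha>_def add_divide_distrib)
    also have "\<dots> = f [] * D / D"
    proof -
      have "(s * f [] - t * f [0]) * s + (s * f [0] - t * f []) * t = f [] * (s * s - t * t)" by algebra
      then show ?thesis by (simp add: D_def)
    qed
    also have "\<dots> = f []" using Dpos by (simp add: D_def)
    finally show ?thesis .
  qed
  moreover have "(\<Sum>v\<in>{[], [0]}. \<alpha> v * Cv [0] v) = f [0]"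
  proof -
    have "(\<Sum>v\<in>{[], [0]}. \<alpha> v * Cv [0] v) = \<alpha> [] * t + \<alpha> [0] * s" using c00 c10 by simp
    also have "\<dots> = ((s * f [] - t * f [0]) * t + (s * f [0] - t * f []) * s) / D"
      by (simp add: \<alpha>_def add_divide_distrib)
    also have "\<dots> = f [0] * D / D"
    proof -
      have "(s * f [] - t * f [0]) * t + (s * f [0] - t * f []) * s = f [0] * (s * s - t * t)" by algebra
      then show ?thesis by (simp add: D_def)
    qed
    also have "\<dots> = f [0]" using Dpos by (simp add: D_def)
    finally show ?thesis .
  qed
  ultimately show ?thesis unfolding B by (intro exI[of _ \<alpha>]) simp
qed

end


lemma decomp_sum:
  fixes q :: "nat list \<Rightarrow> real"
  shows "(\<Sum>v\<in>Sset d e K. q v) = (\<Sum>v\<in>Bset d e. q v) + (\<Sum>u\<in>Iset d e K. \<Sum>v\<in>Ch d e u. q v)"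
proof -
  have fS: "finite (Sset d e K)" unfolding Sset_def by (rule finite_Sset)
  have "(\<Sum>v\<in>Sset d e K. q v) = (\<Sum>v\<in>Sset d e K - Bset d e. q v) + (\<Sum>v\<in>Bset d e. q v)"
    by (rule sum.subset_diff[OF Bset_Sset fS])
  moreover have "(\<Sum>u\<in>Iset d e K. \<Sum>v\<in>{x \<in> Sset d e K - Bset d e. butlast x = u}. q v) = (\<Sum>v\<in>Sset d e K - Bset d e. q v)"
  proof (rule sum.group)
    show "finite (Sset d e K - Bset d e)" using fS by simp
    show "finite (Iset d e K)" by (rule finite_Iset)
    show "butlast ` (Sset d e K - Bset d e) \<subseteq> Iset d e K"
    proof
      fix y assume "y \<in> butlast ` (Sset d e K - Bset d e)"
      then obtain x where x: "x \<in> Sset d e K" "x \<notin> Bset d e" "y = butlast x" by blast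
      then have xV: "x \<in> tree_vertices d" and nz: "dp e x \<noteq> 0" and xK: "dp e x \<le> K"
        by (auto simp: Sset_def Bset_def)
      show "y \<in> Iset d e K" using parent_Ch[OF xV nz] xK x(3) by (simp add: Iset_def)
    qed
  qed
  moreover have "{x \<in> Sset d e K - Bset d e. butlast x = u} = Ch d e u" if u: "u \<in> Iset d e K" for u
  proof (rule set_eqI, rule iffI)
    fix x assume "x \<in> {x \<in> Sset d e K - Bset d e. butlast x = u}"
    then have x: "x \<in> tree_vertices d" "dp e x \<noteq> 0" "butlast x = u" by (auto simp: Sset_def Bset_def)
    then show "x \<in> Ch d e u" using parent_Ch(2)[OF x(1,2)] by simp
  next
    fix x assume x: "x \<in> Ch d e u"
    have uV: "u \<in> tree_vertices d" using u by (simp add: Iset_def)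
    have "x \<in> tree_vertices d" "dp e x = Suc (dp e u)" "butlast x = u"
      using Ch_V[OF x] Ch_dp[OF x] Ch_butlast[OF uV x] by auto
    then show "x \<in> {x \<in> Sset d e K - Bset d e. butlast x = u}"
      using u by (auto simp: Sset_def Bset_def Iset_def)
  qed
  ultimately show ?thesis by (simp add: add.commute cong: sum.cong)
qed

context evp begin

definition avg :: "(nat list \<Rightarrow> real) \<Rightarrow> bool \<Rightarrow> nat list \<Rightarrow> real" where
  "avg f e u = (\<Sum>w\<in>Ch d e u. f w) / real (card (Ch d e u))"

definition bet :: "(nat list \<Rightarrow> real) \<Rightarrow> bool \<Rightarrow> nat list \<Rightarrow> real" where
  "bet f e v = (f v - avg f e (butlast v)) / (s - r)"

lemma bet_sum0:
  assumes u: "u \<in> V"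
  shows "(\<Sum>v\<in>Ch d e u. bet f e v) = 0"
proof -
  have bl: "butlast v = u" if "v \<in> Ch d e u" for v using Ch_butlast[OF u that] .
  have "(\<Sum>v\<in>Ch d e u. bet f e v) = (\<Sum>v\<in>Ch d e u. (f v - avg f e u) / (s - r))"
    unfolding bet_def by (rule sum.cong) (simp_all add: bl)
  also have "\<dots> = ((\<Sum>v\<in>Ch d e u. f v) - real (card (Ch d e u)) * avg f e u) / (s - r)"
    by (simp add: sum_divide_distrib[symmetric] sum_subtractf)
  also have "real (card (Ch d e u)) * avg f e u = (\<Sum>v\<in>Ch d e u. f v)"
  proof -
    have "Ch d e u \<noteq> {}" using Ch_nonempty[OF u d3] .
    then have "card (Ch d e u) \<noteq> 0" by simp
    then show ?thesis by (simp add: avg_def)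
  qed
  finally show ?thesis by simp
qed

lemma blk0:
  assumes u: "u \<in> V" and z: "z \<in> V" and np: "\<And>w. w \<in> Ch d e u \<Longrightarrow> \<not> prefix w z"
  shows "(\<Sum>v\<in>Ch d e u. bet f e v * Cv z v) = 0"
proof -
  obtain v0 where v0: "v0 \<in> Ch d e u" using Ch_nonempty[OF u d3] by blast
  have "(\<Sum>v\<in>Ch d e u. bet f e v * Cv z v) = (\<Sum>v\<in>Ch d e u. bet f e v * Cv z v0)"
  proof (rule sum.cong)
    fix v assume v: "v \<in> Ch d e u"
    show "bet f e v * Cv z v = bet f e v * Cv z v0"
      using Cv_const_block[OF u z v v0 np[OF v] np[OF v0]] by simp
  qed simp
  also have "\<dots> = (\<Sum>v\<in>Ch d e u. bet f e v) * Cv z v0" by (simp add: sum_distrib_right)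
  also have "\<dots> = 0" using bet_sum0[OF u] by simp
  finally show ?thesis .
qed

end


context evp begin

lemma not_prefix_longer: "length v < length w \<Longrightarrow> \<not> prefix w v"
  using prefix_length_le by fastforce

lemma Gdiff:
  fixes f \<alpha> :: "nat list \<Rightarrow> real"
  assumes u: "u \<in> Iset d e K" and v1: "v1 \<in> Ch d e u" and v2: "v2 \<in> Ch d e u"
  shows "((\<Sum>v\<in>Bset d e. \<alpha> v * Cv v1 v) + (\<Sum>u'\<in>Iset d e K. \<Sum>v\<in>Ch d e u'. bet f e v * Cv v1 v))
       - ((\<Sum>v\<in>Bset d e. \<alpha> v * Cv v2 v) + (\<Sum>u'\<in>Iset d e K. \<Sum>v\<in>Ch d e u'. bet f e v * Cv v2 v))
       = f v1 - f v2"
proof -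
  have uV: "u \<in> V" using u by (simp add: Iset_def)
  obtain a1 where a1: "v1 = u @ [a1]" using Ch_form[OF uV v1] by blast
  obtain a2 where a2: "v2 = u @ [a2]" using Ch_form[OF uV v2] by blast
  have v1V: "v1 \<in> V" and v2V: "v2 \<in> V" using Ch_V v1 v2 by auto
  have len: "length v1 = Suc (length u)" "length v2 = Suc (length u)" using a1 a2 by auto
  have dpv: "dp e v1 \<noteq> 0" "dp e v2 \<noteq> 0" using Ch_dp[OF v1] Ch_dp[OF v2] by auto
  have Bpart: "(\<Sum>v\<in>Bset d e. \<alpha> v * Cv v1 v) = (\<Sum>v\<in>Bset d e. \<alpha> v * Cv v2 v)"
  proof (rule sum.cong)
    fix b assume b: "b \<in> Bset d e"
    then have bV: "b \<in> V" and db: "dp e b = 0" by (auto simp: Bset_def)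
    have np: "\<not> prefix v1 b" "\<not> prefix v2 b"
      using dp_prefix[of v1 b e] dp_prefix[of v2 b e] db dpv by auto
    have "Cv b v1 = Cv b v2" by (rule Cv_const_block[OF uV bV v1 v2 np])
    then show "\<alpha> b * Cv v1 b = \<alpha> b * Cv v2 b" using Cv_sym[of v1 b] Cv_sym[of v2 b] by simp
  qed simp
  have other: "(\<Sum>v\<in>Ch d e u'. bet f e v * Cv v1 v) = (\<Sum>v\<in>Ch d e u'. bet f e v * Cv v2 v)"
    if u': "u' \<in> Iset d e K" "u' \<noteq> u" for u'
  proof -
    have u'V: "u' \<in> V" using u' by (simp add: Iset_def)
    show ?thesis
    proof (cases "prefix v1 u' \<or> prefix v2 u'")
      case True
      then have lu: "length v1 \<le> length u'" using prefix_length_le len by fastforce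
      have np1: "\<not> prefix w v1" and np2: "\<not> prefix w v2" if w: "w \<in> Ch d e u'" for w
      proof -
        obtain c where "w = u' @ [c]" using Ch_form[OF u'V w] by blast
        then have "length v1 < length w" "length v2 < length w" using lu len by auto
        then show "\<not> prefix w v1" "\<not> prefix w v2" using not_prefix_longer by auto
      qed
      have "(\<Sum>v\<in>Ch d e u'. bet f e v * Cv v1 v) = 0" by (rule blk0[OF u'V v1V np1])
      moreover have "(\<Sum>v\<in>Ch d e u'. bet f e v * Cv v2 v) = 0" by (rule blk0[OF u'V v2V np2])
      ultimately show ?thesis by simp
    next
      case False
      show ?thesis
      proof (rule sum.cong)
        fix v assume v: "v \<in> Ch d e u'"
        obtain c where vc: "v = u' @ [c]" using Ch_form[OF u'V v] by blast
        have vV: "v \<in> V" using Ch_V[OF v] .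
        have np: "\<not> prefix vi v" if "vi = v1 \<or> vi = v2" for vi
        proof
          assume p: "prefix vi v"
          have "vi \<in> Ch d e u" using that v1 v2 by auto
          then have bvi: "butlast vi = u" using Ch_butlast[OF uV] by blast
          from p vc have "vi = u' @ [c] \<or> prefix vi u'" by (simp add: prefix_snoc)
          then show False
          proof
            assume "vi = u' @ [c]"
            then have "butlast vi = u'" by simp
            then show False using bvi u'(2) by simp
          next
            assume "prefix vi u'"
            then show False using False that by auto
          qed
        qed
        have "Cv v v1 = Cv v v2" by (rule Cv_const_block[OF uV vV v1 v2 np np]) auto
        then show "bet f e v * Cv v1 v = bet f e v * Cv v2 v" using Cv_sym[of v1 v] Cv_sym[of v2 v] by simp
      qed simp
    qed
  qed
  have own: "(\<Sum>v\<in>Ch d e u. bet f e v * Cv v1 v) - (\<Sum>v\<in>Ch d e u. bet f e v * Cv v2 v) = f v1 - f v2"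
  proof (cases "v1 = v2")
    case True then show ?thesis by simp
  next
    case False
    have sr0: "s - r \<noteq> 0" using s_minus_r by simp
    have b1: "bet f e v1 * (s - r) = f v1 - avg f e u"
      using Ch_butlast[OF uV v1] sr0 by (simp add: bet_def)
    have b2: "bet f e v2 * (s - r) = f v2 - avg f e u"
      using Ch_butlast[OF uV v2] sr0 by (simp add: bet_def)
    have nb: "Ch d e u \<subseteq> tree_nbrs d u" by (rule Ch_nbrs)
    have "(\<Sum>v\<in>Ch d e u. bet f e v * Cv v1 v) - (\<Sum>v\<in>Ch d e u. bet f e v * Cv v2 v)
        = (\<Sum>v\<in>Ch d e u. (if v = v1 then bet f e v1 * (s - r) else 0) + (if v = v2 then bet f e v2 * (r - s) else 0))"
      unfolding sum_subtractf[symmetric]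
    proof (rule sum.cong)
      fix v assume v: "v \<in> Ch d e u"
      have vV: "v \<in> V" using Ch_V[OF v] .
      show "bet f e v * Cv v1 v - bet f e v * Cv v2 v
          = (if v = v1 then bet f e v1 * (s - r) else 0) + (if v = v2 then bet f e v2 * (r - s) else 0)"
      proof (cases "v = v1")
        case True
        have "Cv v1 v1 = s" using Cv_diag[OF v1V] .
        moreover have "Cv v2 v1 = r" using Cv_sib[OF uV] nb v1 v2 False by auto
        ultimately show ?thesis using True False by (simp add: algebra_simps)
      next
        case f1: False
        show ?thesis
        proof (cases "v = v2")
          case True
          have "Cv v2 v2 = s" using Cv_diag[OF v2V] .
          moreover have "Cv v1 v2 = r" using Cv_sib[OF uV] nb v1 v2 False by auto
          ultimately show ?thesis using True False by (simp add: algebra_simps)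
        next
          case f2: False
          have "Cv v1 v = r" using Cv_sib[OF uV] nb v1 v f1 by auto
          moreover have "Cv v2 v = r" using Cv_sib[OF uV] nb v2 v f2 by auto
          ultimately show ?thesis using f1 f2 by simp
        qed
      qed
    qed simp
    also have "\<dots> = bet f e v1 * (s - r) + bet f e v2 * (r - s)"
      using v1 v2 by (simp add: sum.distrib)
    also have "\<dots> = f v1 - f v2" using b1 b2 by (simp add: algebra_simps)
    finally show ?thesis .
  qed
  have blocks: "(\<Sum>u'\<in>Iset d e K. \<Sum>v\<in>Ch d e u'. bet f e v * Cv v1 v) - (\<Sum>u'\<in>Iset d e K. \<Sum>v\<in>Ch d e u'. bet f e v * Cv v2 v)
     = (\<Sum>u'\<in>Iset d e K. (\<Sum>v\<in>Ch d e u'. bet f e v * Cv v1 v) - (\<Sum>v\<in>Ch d e u'. bet f e v * Cv v2 v))"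
    by (rule sum_subtractf[symmetric])
  also have "\<dots> = (\<Sum>u'\<in>Iset d e K. if u' = u then f v1 - f v2 else 0)"
  proof (rule sum.cong)
    fix u' assume u': "u' \<in> Iset d e K"
    show "(\<Sum>v\<in>Ch d e u'. bet f e v * Cv v1 v) - (\<Sum>v\<in>Ch d e u'. bet f e v * Cv v2 v)
      = (if u' = u then f v1 - f v2 else 0)"
      using own other[OF u'] by (cases "u' = u") simp_all
  qed simp
  also have "\<dots> = f v1 - f v2" using u finite_Iset by simp
  finally show ?thesis using Bpart by simp
qed

end


context evp begin

lemma hard:
  fixes c f :: "nat list \<Rightarrow> real"
  assumes AEc: "AE \<omega> in M. (\<Sum>x\<in>Sset d e K. c x * X x \<omega>) = 0"
    and feq: "\<And>u. u \<in> Iset d e K \<Longrightarrow> l * f u = (\<Sum>w\<in>tree_nbrs d u. f w)"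
  shows "(\<Sum>x\<in>Sset d e K. c x * f x) = 0"
proof -
  have SV: "Sset d e K \<subseteq> V" by (auto simp: Sset_def)
  have fS: "finite (Sset d e K)" unfolding Sset_def by (rule finite_Sset)
  obtain \<alpha> where \<alpha>: "\<And>b. b \<in> Bset d e \<Longrightarrow> (\<Sum>v\<in>Bset d e. \<alpha> v * Cv b v) = f b"
    using alpha_exists[of e f] by blast
  define \<gamma> where "\<gamma> v = (if v \<in> Bset d e then \<alpha> v else bet f e v)" for v
  define G where "G x = (\<Sum>v\<in>Sset d e K. \<gamma> v * Cv x v)" for x
  have Gdec: "G x = (\<Sum>v\<in>Bset d e. \<alpha> v * Cv x v) + (\<Sum>u\<in>Iset d e K. \<Sum>v\<in>Ch d e u. bet f e v * Cv x v)" for x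
  proof -
    have "G x = (\<Sum>v\<in>Bset d e. \<gamma> v * Cv x v) + (\<Sum>u\<in>Iset d e K. \<Sum>v\<in>Ch d e u. \<gamma> v * Cv x v)"
      unfolding G_def by (rule decomp_sum)
    moreover have "(\<Sum>v\<in>Bset d e. \<gamma> v * Cv x v) = (\<Sum>v\<in>Bset d e. \<alpha> v * Cv x v)"
      by (rule sum.cong) (simp_all add: \<gamma>_def)
    moreover have "(\<Sum>v\<in>Ch d e u. \<gamma> v * Cv x v) = (\<Sum>v\<in>Ch d e u. bet f e v * Cv x v)" for u
    proof (rule sum.cong)
      fix v assume "v \<in> Ch d e u"
      then have "v \<notin> Bset d e" using Ch_dp[of v d e u] by (auto simp: Bset_def)
      then show "\<gamma> v * Cv x v = bet f e v * Cv x v" by (simp add: \<gamma>_def)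
    qed simp
    ultimately show ?thesis by simp
  qed
  have Geq: "l * G u = (\<Sum>w\<in>tree_nbrs d u. G w)" if u: "u \<in> Iset d e K" for u
  proof -
    have uV: "u \<in> V" using u by (simp add: Iset_def)
    have "(\<Sum>w\<in>tree_nbrs d u. G w) = (\<Sum>v\<in>Sset d e K. \<Sum>w\<in>tree_nbrs d u. \<gamma> v * Cv w v)"
      unfolding G_def by (rule sum.swap)
    also have "\<dots> = (\<Sum>v\<in>Sset d e K. \<gamma> v * (\<Sum>w\<in>tree_nbrs d u. Cv w v))"
      by (simp add: sum_distrib_left)
    also have "\<dots> = (\<Sum>v\<in>Sset d e K. \<gamma> v * (l * Cv u v))"
    proof (rule sum.cong)
      fix v assume "v \<in> Sset d e K"
      then have "v \<in> V" using SV by blast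
      then show "\<gamma> v * (\<Sum>w\<in>tree_nbrs d u. Cv w v) = \<gamma> v * (l * Cv u v)" using C5[OF uV] by simp
    qed simp
    also have "\<dots> = l * G u" unfolding G_def by (simp add: sum_distrib_left algebra_simps)
    finally show ?thesis by simp
  qed
  have GB: "f b = G b" if b: "b \<in> Bset d e" for b
  proof -
    have bV: "b \<in> V" and db: "dp e b = 0" using b by (auto simp: Bset_def)
    have "(\<Sum>v\<in>Ch d e u. bet f e v * Cv b v) = 0" if u: "u \<in> Iset d e K" for u
    proof (rule blk0)
      show "u \<in> V" using u by (simp add: Iset_def)
      show "b \<in> V" by (rule bV)
      fix w assume "w \<in> Ch d e u"
      then have "dp e w \<noteq> 0" using Ch_dp by auto
      then show "\<not> prefix w b" using dp_prefix[of w b e] db by auto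
    qed
    then show ?thesis using Gdec[of b] \<alpha>[OF b] by simp
  qed
  have GD: "f v1 - f v2 = G v1 - G v2" if "u \<in> Iset d e K" "v1 \<in> Ch d e u" "v2 \<in> Ch d e u" for u v1 v2
    using Gdiff[OF that, of \<alpha> f] Gdec[of v1] Gdec[of v2] by simp
  have fG: "f x = G x" if "x \<in> Sset d e K" for x
    by (rule matching[of d e K l f G]) (use feq Geq GB GD that in auto)
  have "(\<Sum>x\<in>Sset d e K. c x * f x) = (\<Sum>x\<in>Sset d e K. \<Sum>v\<in>Sset d e K. (c x * \<gamma> v) * Cv x v)"
    by (rule sum.cong) (simp_all add: fG G_def sum_distrib_left mult.assoc)
  also have "\<dots> = (\<integral>\<omega>. (\<Sum>x\<in>Sset d e K. \<Sum>v\<in>Sset d e K. (c x * \<gamma> v) * (X x \<omega> * X v \<omega>)) \<partial>M)"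
  proof -
    have i1: "integrable M (\<lambda>\<omega>. (c x * \<gamma> v) * (X x \<omega> * X v \<omega>))" if "x \<in> Sset d e K" "v \<in> Sset d e K" for x v
      using int_prod[of x v] that SV by auto
    have i2: "integrable M (\<lambda>\<omega>. \<Sum>v\<in>Sset d e K. (c x * \<gamma> v) * (X x \<omega> * X v \<omega>))" if "x \<in> Sset d e K" for x
      by (rule Bochner_Integration.integrable_sum) (use i1 that in auto)
    have "(\<integral>\<omega>. (\<Sum>x\<in>Sset d e K. \<Sum>v\<in>Sset d e K. (c x * \<gamma> v) * (X x \<omega> * X v \<omega>)) \<partial>M)
        = (\<Sum>x\<in>Sset d e K. \<integral>\<omega>. (\<Sum>v\<in>Sset d e K. (c x * \<gamma> v) * (X x \<omega> * X v \<omega>)) \<partial>M)"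
      by (rule Bochner_Integration.integral_sum[where f="\<lambda>x \<omega>. \<Sum>v\<in>Sset d e K. (c x * \<gamma> v) * (X x \<omega> * X v \<omega>)"]) (rule i2)
    also have "\<dots> = (\<Sum>x\<in>Sset d e K. \<Sum>v\<in>Sset d e K. \<integral>\<omega>. (c x * \<gamma> v) * (X x \<omega> * X v \<omega>) \<partial>M)"
    proof (rule sum.cong)
      fix x assume x: "x \<in> Sset d e K"
      show "(\<integral>\<omega>. (\<Sum>v\<in>Sset d e K. (c x * \<gamma> v) * (X x \<omega> * X v \<omega>)) \<partial>M)
          = (\<Sum>v\<in>Sset d e K. \<integral>\<omega>. (c x * \<gamma> v) * (X x \<omega> * X v \<omega>) \<partial>M)"
        by (rule Bochner_Integration.integral_sum[where f="\<lambda>v \<omega>. (c x * \<gamma> v) * (X x \<omega> * X v \<omega>)"]) (rule i1[OF x])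
    qed simp
    also have "\<dots> = (\<Sum>x\<in>Sset d e K. \<Sum>v\<in>Sset d e K. (c x * \<gamma> v) * Cv x v)"
      by (simp add: Cv_def)
    finally show ?thesis by simp
  qed
  also have "\<dots> = (\<integral>\<omega>. (\<Sum>x\<in>Sset d e K. c x * X x \<omega>) * (\<Sum>v\<in>Sset d e K. \<gamma> v * X v \<omega>) \<partial>M)"
  proof -
    have "(\<lambda>\<omega>. \<Sum>x\<in>Sset d e K. \<Sum>v\<in>Sset d e K. (c x * \<gamma> v) * (X x \<omega> * X v \<omega>))
      = (\<lambda>\<omega>. (\<Sum>x\<in>Sset d e K. c x * X x \<omega>) * (\<Sum>v\<in>Sset d e K. \<gamma> v * X v \<omega>))"
      by (rule ext, simp only: sum_product) (simp add: mult_ac)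
    then show ?thesis by simp
  qed
  also have "\<dots> = (\<integral>\<omega>. 0 \<partial>M)"
  proof (rule integral_cong_AE)
    show "(\<lambda>\<omega>. (\<Sum>x\<in>Sset d e K. c x * X x \<omega>) * (\<Sum>v\<in>Sset d e K. \<gamma> v * X v \<omega>)) \<in> borel_measurable M"
    proof (intro borel_measurable_times borel_measurable_sum borel_measurable_const)
      fix x assume "x \<in> Sset d e K"
      then have "x \<in> V" using SV by blast
      then show "X x \<in> borel_measurable M" by (rule meas)
    next
      fix x assume "x \<in> Sset d e K"
      then have "x \<in> V" using SV by blast
      then show "X x \<in> borel_measurable M" by (rule meas)
    qed
    show "(\<lambda>\<omega>. 0) \<in> borel_measurable M" by simp
    show "AE \<omega> in M. (\<Sum>x\<in>Sset d e K. c x * X x \<omega>) * (\<Sum>v\<in>Sset d e K. \<gamma> v * X v \<omega>) = 0"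
      using AEc by eventually_elim simp
  qed
  also have "\<dots> = 0" by simp
  finally show ?thesis .
qed

end


lemma sum_fun_apply: "(\<Sum>i\<in>A. f i) x = (\<Sum>i\<in>A. (f i x :: 'b::comm_monoid_add))"
  by (induction A rule: infinite_finite_induct) auto

interpretation VS: vector_space "\<lambda>(c::real) (f::nat list \<Rightarrow> real) u. c * f u"
  by unfold_locales (auto simp: fun_eq_iff algebra_simps)

interpretation RS: vector_space "(*) :: real \<Rightarrow> real \<Rightarrow> real"
  by unfold_locales (auto simp: algebra_simps)

interpretation VP: vector_space_pair "\<lambda>(c::real) (f::nat list \<Rightarrow> real) u. c * f u" "(*) :: real \<Rightarrow> real \<Rightarrow> real" ..

lemma fun_span_VS: "fun_span A = VS.span A"
  by (simp add: fun_span_def)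

lemma duality:
  fixes A :: "(nat list \<Rightarrow> real) set" and f :: "nat list \<Rightarrow> real" and S :: "nat list set"
  assumes fS: "finite S" and A: "\<And>x u. x \<in> A \<Longrightarrow> u \<notin> S \<Longrightarrow> x u = 0"
    and f0: "\<And>u. u \<notin> S \<Longrightarrow> f u = 0" and fn: "f \<notin> fun_span A"
  shows "\<exists>c. (\<forall>x\<in>A. (\<Sum>u\<in>S. c u * x u) = 0) \<and> (\<Sum>u\<in>S. c u * f u) \<noteq> 0"
proof -
  obtain B where B: "B \<subseteq> A" "VS.independent B" "A \<subseteq> VS.span B"
    using VS.maximal_independent_subset[of A] by blast
  have "VS.span B \<subseteq> VS.span A" using B(1) by (rule VS.span_mono)
  then have fB: "f \<notin> VS.span B" using fn by (auto simp: fun_span_VS)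
  then have fnB: "f \<notin> B" using VS.span_superset by blast
  have ind: "VS.independent (insert f B)" by (rule VS.independent_insertI[OF fB B(2)])
  obtain g where g: "Vector_Spaces.linear (\<lambda>(c::real) (f::nat list \<Rightarrow> real) u. c * f u) (*) g"
      "\<forall>x\<in>insert f B. g x = (if x = f then 1 else 0)"
    using VP.linear_independent_extend[of "insert f B" "\<lambda>x. if x = f then 1 else 0", OF ind] by blast
  interpret L: Vector_Spaces.linear "\<lambda>(c::real) (f::nat list \<Rightarrow> real) u. c * f u" "(*) :: real \<Rightarrow> real \<Rightarrow> real" g
    by (rule g(1))
  have gf: "g f = 1" using g(2) by simp
  have gB: "\<And>b. b \<in> B \<Longrightarrow> g b = 0" using g(2) fnB by auto
  have g0: "g x = 0" if "x \<in> VS.span B" for x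
  proof -
    have "g x = (\<lambda>_. 0) x"
      by (rule VP.linear_eq_on[OF g(1) VP.linear_zero that]) (simp add: gB)
    then show ?thesis by simp
  qed
  define \<delta> where "\<delta> u = (\<lambda>v. if v = u then 1 else (0::real))" for u :: "nat list"
  have rep: "g x = (\<Sum>u\<in>S. g (\<delta> u) * x u)" if x0: "\<And>u. u \<notin> S \<Longrightarrow> x u = 0" for x
  proof -
    have xs: "x = (\<Sum>u\<in>S. (\<lambda>v. x u * \<delta> u v))"
    proof (rule ext)
      fix v
      have "(\<Sum>u\<in>S. (\<lambda>v. x u * \<delta> u v)) v = (\<Sum>u\<in>S. x u * \<delta> u v)" by (rule sum_fun_apply)
      also have "\<dots> = (\<Sum>u\<in>S. if v = u then x u else 0)" by (rule sum.cong) (auto simp: \<delta>_def)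
      also have "\<dots> = x v" using fS x0 by (cases "v \<in> S") auto
      finally show "x v = (\<Sum>u\<in>S. (\<lambda>v. x u * \<delta> u v)) v" by simp
    qed
    have "g x = g (\<Sum>u\<in>S. (\<lambda>v. x u * \<delta> u v))" using xs by simp
    also have "\<dots> = (\<Sum>u\<in>S. g (\<lambda>v. x u * \<delta> u v))" by (rule L.sum)
    also have "\<dots> = (\<Sum>u\<in>S. x u * g (\<delta> u))"
    proof (rule sum.cong)
      fix u show "g (\<lambda>v. x u * \<delta> u v) = x u * g (\<delta> u)" using L.scale[of "x u" "\<delta> u"] by simp
    qed simp
    finally show ?thesis by (simp add: mult.commute)
  qed
  show ?thesis
  proof (intro exI[of _ "\<lambda>u. g (\<delta> u)"] conjI ballI)
    fix x assume x: "x \<in> A"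
    then have "x \<in> VS.span B" using B(3) by blast
    then have "g x = 0" by (rule g0)
    then show "(\<Sum>u\<in>S. g (\<delta> u) * x u) = 0" using rep[of x] A[OF x] by simp
  next
    show "(\<Sum>u\<in>S. g (\<delta> u) * f u) \<noteq> 0" using rep[of f] f0 gf by simp
  qed
qed


context evp begin

definition Xs :: "nat list set \<Rightarrow> 'a \<Rightarrow> nat list \<Rightarrow> real" where
  "Xs S \<omega> = (\<lambda>u. if u \<in> S then X u \<omega> else 0)"

definition box :: "nat list set \<Rightarrow> (nat list \<Rightarrow> real) \<Rightarrow> real \<Rightarrow> (nat list \<Rightarrow> real) set" where
  "box S q \<epsilon> = {y. (\<forall>u. u \<notin> S \<longrightarrow> y u = 0) \<and> (\<forall>u\<in>S. \<bar>y u - q u\<bar> < \<epsilon>)}"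

lemma marginal_box: "marginal M X S A = measure M {\<omega> \<in> space M. Xs S \<omega> \<in> A}"
  by (simp add: marginal_def Xs_def)

lemma supp_iff: "x \<in> marginal_support M X S \<longleftrightarrow>
    (\<forall>u. u \<notin> S \<longrightarrow> x u = 0) \<and> (\<forall>\<epsilon>>0. marginal M X S (box S x \<epsilon>) > 0)"
  by (simp add: marginal_support_def box_def)

lemma box_event:
  assumes fS: "finite S" and SV: "S \<subseteq> V"
  shows "{\<omega> \<in> space M. Xs S \<omega> \<in> box S q \<epsilon>} \<in> sets M"
proof -
  have eq: "{\<omega> \<in> space M. Xs S \<omega> \<in> box S q \<epsilon>} = {\<omega> \<in> space M. \<forall>u\<in>S. \<bar>X u \<omega> - q u\<bar> < \<epsilon>}"
    by (auto simp: Xs_def box_def)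
  have "Measurable.pred M (\<lambda>\<omega>. \<forall>u\<in>S. \<bar>X u \<omega> - q u\<bar> < \<epsilon>)"
  proof (rule pred_intros_finite(3)[OF fS])
    fix u assume "u \<in> S"
    then have [measurable]: "X u \<in> borel_measurable M" using SV meas by blast
    show "Measurable.pred M (\<lambda>\<omega>. \<bar>X u \<omega> - q u\<bar> < \<epsilon>)" by measurable
  qed
  then show ?thesis unfolding eq by (simp add: pred_def)
qed

lemma supp_AE:
  assumes fS: "finite S" and SV: "S \<subseteq> V"
  shows "AE \<omega> in M. Xs S \<omega> \<in> marginal_support M X S"
proof -
  define Q where "Q = {q :: nat list \<Rightarrow> real. (\<forall>u. u \<notin> S \<longrightarrow> q u = 0) \<and> (\<forall>u\<in>S. q u \<in> \<rat>)}"
  have cQ: "countable Q"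
  proof (rule countable_subset)
    show "Q \<subseteq> (\<lambda>p u. if u \<in> S then p u else 0) ` (PiE S (\<lambda>_. \<rat>))"
    proof
      fix q assume q: "q \<in> Q"
      have "restrict q S \<in> PiE S (\<lambda>_. \<rat>)" using q by (auto simp: Q_def)
      moreover have "q = (\<lambda>u. if u \<in> S then restrict q S u else 0)" using q by (auto simp: Q_def fun_eq_iff)
      ultimately show "q \<in> (\<lambda>p u. if u \<in> S then p u else 0) ` (PiE S (\<lambda>_. \<rat>))" by blast
    qed
    show "countable ((\<lambda>p u. if u \<in> S then p u else 0) ` (PiE S (\<lambda>_. \<rat>)))"
      by (intro countable_image countable_PiE fS countable_rat)
  qed
  define N where "N = {p \<in> Q \<times> (UNIV :: nat set). marginal M X S (box S (fst p) (1 / real (Suc (snd p)))) = 0}"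
  have cN: "countable N"
    by (rule countable_subset[of _ "Q \<times> (UNIV :: nat set)"]) (auto simp: N_def intro: countable_SIGMA cQ)
  have "\<forall>p\<in>N. AE \<omega> in M. Xs S \<omega> \<notin> box S (fst p) (1 / real (Suc (snd p)))"
  proof
    fix p assume p: "p \<in> N"
    let ?E = "{\<omega> \<in> space M. Xs S \<omega> \<in> box S (fst p) (1 / real (Suc (snd p)))}"
    have E: "?E \<in> sets M" by (rule box_event[OF fS SV])
    have "measure M ?E = 0" using p by (simp add: N_def marginal_box)
    then have "emeasure M ?E = 0" using E by (simp add: emeasure_eq_measure)
    then show "AE \<omega> in M. Xs S \<omega> \<notin> box S (fst p) (1 / real (Suc (snd p)))"
      by (subst AE_iff_measurable[OF E]) auto
  qed
  then have "AE \<omega> in M. \<forall>p\<in>N. Xs S \<omega> \<notin> box S (fst p) (1 / real (Suc (snd p)))"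
    by (subst AE_ball_countable[OF cN])
  then show ?thesis
  proof eventually_elim
    case (elim \<omega>)
    show "Xs S \<omega> \<in> marginal_support M X S"
      unfolding supp_iff
    proof (intro conjI allI impI)
      fix u assume "u \<notin> S" then show "Xs S \<omega> u = 0" by (simp add: Xs_def)
    next
      fix \<epsilon> :: real assume \<epsilon>: "\<epsilon> > 0"
      show "marginal M X S (box S (Xs S \<omega>) \<epsilon>) > 0"
      proof (rule ccontr)
        assume "\<not> marginal M X S (box S (Xs S \<omega>) \<epsilon>) > 0"
        then have m0: "marginal M X S (box S (Xs S \<omega>) \<epsilon>) \<le> 0" by simp
        obtain n where n: "inverse (real (Suc n)) < \<epsilon> / 2" using reals_Archimedean[of "\<epsilon>/2"] \<epsilon> by auto
        define \<delta> where "\<delta> = 1 / real (Suc n)"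
        have \<delta>: "\<delta> > 0" "2 * \<delta> < \<epsilon>" using n by (auto simp: \<delta>_def field_simps)
        have "\<exists>r\<in>\<rat>. X u \<omega> - \<delta> < r \<and> r < X u \<omega>" for u
          using Rats_dense_in_real[of "X u \<omega> - \<delta>" "X u \<omega>"] \<delta> by auto
        then obtain rq where rq: "\<And>u. rq u \<in> \<rat>" "\<And>u. X u \<omega> - \<delta> < rq u" "\<And>u. rq u < X u \<omega>"
          by metis
        define q where "q u = (if u \<in> S then rq u else 0)" for u
        have qQ: "q \<in> Q" using rq by (auto simp: Q_def q_def)
        have cl: "\<bar>X u \<omega> - rq u\<bar> < \<delta>" for u
          using rq(2)[of u] rq(3)[of u] by (simp add: abs_less_iff)
        have inb: "Xs S \<omega> \<in> box S q \<delta>"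
          using cl by (auto simp: box_def Xs_def q_def)
        have sub: "box S q \<delta> \<subseteq> box S (Xs S \<omega>) \<epsilon>"
        proof
          fix y assume y: "y \<in> box S q \<delta>"
          show "y \<in> box S (Xs S \<omega>) \<epsilon>"
            unfolding box_def
          proof (intro CollectI conjI allI impI ballI)
            fix u assume "u \<notin> S" then show "y u = 0" using y by (simp add: box_def)
          next
            fix u assume u: "u \<in> S"
            have "\<bar>y u - q u\<bar> < \<delta>" using y u by (simp add: box_def)
            moreover have "\<bar>q u - Xs S \<omega> u\<bar> < \<delta>" using u cl[of u] by (simp add: q_def Xs_def abs_minus_commute)
            ultimately show "\<bar>y u - Xs S \<omega> u\<bar> < \<epsilon>" using \<delta> by linarith
          qed
        qed
        have "marginal M X S (box S q \<delta>) \<le> marginal M X S (box S (Xs S \<omega>) \<epsilon>)"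
          unfolding marginal_box
          by (rule finite_measure_mono) (use sub box_event[OF fS SV] in auto)
        then have "marginal M X S (box S q \<delta>) = 0"
          using m0 by (simp add: marginal_box measure_nonneg antisym)
        then have "(q, n) \<in> N" using qQ by (simp add: N_def \<delta>_def)
        then show False using elim inb by (auto simp: \<delta>_def)
      qed
    qed
  qed
qed

end


context evp begin

lemma supp_W:
  assumes fS: "finite S" and SV: "S \<subseteq> V" and x: "x \<in> marginal_support M X S"
    and u: "u \<in> S" and ball: "tree_ball d 1 {u} \<subseteq> S"
  shows "l * x u = (\<Sum>w\<in>tree_nbrs d u. x w)"
proof (rule ccontr)
  assume ne: "l * x u \<noteq> (\<Sum>w\<in>tree_nbrs d u. x w)"
  define \<delta> where "\<delta> = \<bar>l * x u - (\<Sum>w\<in>tree_nbrs d u. x w)\<bar>"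
  have \<delta>: "\<delta> > 0" using ne by (simp add: \<delta>_def)
  have uV: "u \<in> V" using u SV by blast
  have "insert u (tree_nbrs d u) \<subseteq> S" using ball by (simp only: ball1[OF uV])
  then have NS: "tree_nbrs d u \<subseteq> S" by blast
  define C where "C = \<bar>l\<bar> + real (card (tree_nbrs d u)) + 1"
  have C: "C > 0" by (simp add: C_def add_nonneg_pos)
  define \<epsilon> where "\<epsilon> = \<delta> / C"
  have \<epsilon>: "\<epsilon> > 0" using \<delta> C by (simp add: \<epsilon>_def)
  have Ce: "C * \<epsilon> = \<delta>" using C by (simp add: \<epsilon>_def)
  have pos: "marginal M X S (box S x \<epsilon>) > 0" using x \<epsilon> by (simp add: supp_iff)
  let ?E = "{\<omega> \<in> space M. \<not> ((\<Sum>w\<in>tree_nbrs d u. X w \<omega>) = l * X u \<omega>)}"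
  have NV: "tree_nbrs d u \<subseteq> V" using nbrs_V by blast
  have Eeq: "{\<omega> \<in> space M. (\<Sum>w\<in>tree_nbrs d u. X w \<omega>) = l * X u \<omega>} \<in> sets M"
  proof (rule measurable_equality_set)
    show "(\<lambda>\<omega>. \<Sum>w\<in>tree_nbrs d u. X w \<omega>) \<in> borel_measurable M"
    proof (rule borel_measurable_sum)
      fix w assume "w \<in> tree_nbrs d u" then show "X w \<in> borel_measurable M" using NV meas by blast
    qed
    show "(\<lambda>\<omega>. l * X u \<omega>) \<in> borel_measurable M" using uV by measurable
  qed
  have Eset: "?E \<in> sets M" using sets.sets_Collect_neg[OF Eeq] .
  have "emeasure M ?E = 0"
    using eigen_AE[OF uV] by (subst (asm) AE_iff_measurable[OF Eset]) auto
  then have E0: "measure M ?E = 0" by (simp add: measure_def)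
  have sub: "{\<omega> \<in> space M. Xs S \<omega> \<in> box S x \<epsilon>} \<subseteq> ?E"
  proof (rule subsetI, rule CollectI, rule conjI)
    fix \<omega> assume \<omega>: "\<omega> \<in> {\<omega> \<in> space M. Xs S \<omega> \<in> box S x \<epsilon>}"
    then show "\<omega> \<in> space M" by simp
    have hb: "\<bar>X v \<omega> - x v\<bar> < \<epsilon>" if "v \<in> S" for v
      using \<omega> that by (simp add: box_def Xs_def)
    have "\<bar>(l * X u \<omega> - (\<Sum>w\<in>tree_nbrs d u. X w \<omega>)) - (l * x u - (\<Sum>w\<in>tree_nbrs d u. x w))\<bar>
        = \<bar>l * (X u \<omega> - x u) - (\<Sum>w\<in>tree_nbrs d u. X w \<omega> - x w)\<bar>"
      by (simp add: sum_subtractf algebra_simps)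
    also have "\<dots> \<le> \<bar>l * (X u \<omega> - x u)\<bar> + \<bar>\<Sum>w\<in>tree_nbrs d u. X w \<omega> - x w\<bar>"
      by (rule abs_triangle_ineq4)
    also have "\<dots> \<le> \<bar>l\<bar> * \<epsilon> + real (card (tree_nbrs d u)) * \<epsilon>"
    proof (rule add_mono)
      have "\<bar>l * (X u \<omega> - x u)\<bar> = \<bar>l\<bar> * \<bar>X u \<omega> - x u\<bar>" by (simp add: abs_mult)
      also have "\<dots> \<le> \<bar>l\<bar> * \<epsilon>" using hb[OF u] by (intro mult_left_mono) auto
      finally show "\<bar>l * (X u \<omega> - x u)\<bar> \<le> \<bar>l\<bar> * \<epsilon>" .
      have "\<bar>\<Sum>w\<in>tree_nbrs d u. X w \<omega> - x w\<bar> \<le> (\<Sum>w\<in>tree_nbrs d u. \<bar>X w \<omega> - x w\<bar>)"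
        by (rule sum_abs)
      also have "\<dots> \<le> (\<Sum>w\<in>tree_nbrs d u. \<epsilon>)"
      proof (rule sum_mono)
        fix w assume "w \<in> tree_nbrs d u"
        then have "w \<in> S" using NS by blast
        then show "\<bar>X w \<omega> - x w\<bar> \<le> \<epsilon>" using hb by fastforce
      qed
      also have "\<dots> = real (card (tree_nbrs d u)) * \<epsilon>" by simp
      finally show "\<bar>\<Sum>w\<in>tree_nbrs d u. X w \<omega> - x w\<bar> \<le> real (card (tree_nbrs d u)) * \<epsilon>" .
    qed
    also have "\<dots> < C * \<epsilon>" using \<epsilon> by (simp add: C_def algebra_simps)
    also have "\<dots> = \<delta>" by (rule Ce)
    finally have lt: "\<bar>(l * X u \<omega> - (\<Sum>w\<in>tree_nbrs d u. X w \<omega>)) - (l * x u - (\<Sum>w\<in>tree_nbrs d u. x w))\<bar> < \<delta>" .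
    show "\<not> ((\<Sum>w\<in>tree_nbrs d u. X w \<omega>) = l * X u \<omega>)"
    proof
      assume "(\<Sum>w\<in>tree_nbrs d u. X w \<omega>) = l * X u \<omega>"
      then have "\<bar>(l * X u \<omega> - (\<Sum>w\<in>tree_nbrs d u. X w \<omega>)) - (l * x u - (\<Sum>w\<in>tree_nbrs d u. x w))\<bar> = \<delta>"
        by (simp add: \<delta>_def abs_minus_commute)
      then show False using lt by simp
    qed
  qed
  have "marginal M X S (box S x \<epsilon>) \<le> measure M ?E"
    unfolding marginal_box by (rule finite_measure_mono[OF sub Eset])
  then show False using pos E0 by simp
qed

end

theorem mainTheorem5:
  fixes d :: nat and k :: nat and l :: real
    and M :: "'a measure" and X :: "nat list \<Rightarrow> 'a \<Rightarrow> real" and S :: "nat list set"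
  assumes "d \<ge> 3"
    and "S = tree_ball d k (tree_C d) \<or> S = tree_ball d k tree_edge"
    and "eigenvector_process d l M X"
    and "\<bar>l\<bar> < real d"
  shows "fun_span (marginal_support M X S) = W_space d l S"
proof -
  interpret E: evp d l M X by unfold_locales (use assms in auto)
  obtain e K where SK: "S = Sset d e K"
  proof (cases "S = tree_ball d k (tree_C d)")
    case True
    have "S = tree_ball d k (tree_ball d 1 {[]})" using True by (simp add: tree_C_def tree_root_def)
    also have "\<dots> = tree_ball d (k + 1) {[]}" by (rule ball_ball)
    also have "\<dots> = Sset d False (k + 1)" using ball_dp[of "{[]}" False d "k + 1"] assms(1)
      by (simp add: Sset_def)
    finally show ?thesis using that by blast
  next
    case False
    then have "S = tree_ball d k {[], [0]}" using assms(2) by (simp add: tree_edge_def tree_root_def)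
    also have "\<dots> = Sset d True k" using ball_dp[of "{[], [0]}" True d k] assms(1)
      by (simp add: Sset_def)
    finally show ?thesis using that by blast
  qed
  have fS: "finite S" unfolding SK Sset_def by (rule finite_Sset)
  have SV: "S \<subseteq> tree_vertices d" unfolding SK Sset_def by blast
  show ?thesis
  proof
    show "fun_span (marginal_support M X S) \<subseteq> W_space d l S"
      unfolding fun_span_VS
    proof (rule VS.span_minimal)
      show "marginal_support M X S \<subseteq> W_space d l S"
      proof
        fix x assume x: "x \<in> marginal_support M X S"
        show "x \<in> W_space d l S"
          unfolding W_space_def
          using x E.supp_W[OF fS SV x] by (simp add: E.supp_iff)
      qed
      show "VS.subspace (W_space d l S)"
        unfolding VS.subspace_def W_space_def
        by (auto simp: sum.distrib sum_distrib_left algebra_simps)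
    qed
  next
    show "W_space d l S \<subseteq> fun_span (marginal_support M X S)"
    proof
      fix f assume f: "f \<in> W_space d l S"
      show "f \<in> fun_span (marginal_support M X S)"
      proof (rule ccontr)
        assume fn: "f \<notin> fun_span (marginal_support M X S)"
        have A0: "\<And>x u. x \<in> marginal_support M X S \<Longrightarrow> u \<notin> S \<Longrightarrow> x u = 0"
          by (simp add: E.supp_iff)
        have f0: "\<And>u. u \<notin> S \<Longrightarrow> f u = 0" using f by (simp add: W_space_def)
        have ex: "\<exists>c. (\<forall>x\<in>marginal_support M X S. (\<Sum>u\<in>S. c u * x u) = 0) \<and> (\<Sum>u\<in>S. c u * f u) \<noteq> 0"
        proof (rule duality)
          show "finite S" by (rule fS)
          show "\<And>x u. x \<in> marginal_support M X S \<Longrightarrow> u \<notin> S \<Longrightarrow> x u = 0" by (rule A0)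
          show "\<And>u. u \<notin> S \<Longrightarrow> f u = 0" by (rule f0)
          show "f \<notin> fun_span (marginal_support M X S)" by (rule fn)
        qed
        obtain c where c: "\<forall>x\<in>marginal_support M X S. (\<Sum>u\<in>S. c u * x u) = 0"
            "(\<Sum>u\<in>S. c u * f u) \<noteq> 0"
          using ex by blast
        have AEc: "AE \<omega> in M. (\<Sum>x\<in>Sset d e K. c x * X x \<omega>) = 0"
          using E.supp_AE[OF fS SV]
        proof eventually_elim
          case (elim \<omega>)
          then have "(\<Sum>u\<in>S. c u * E.Xs S \<omega> u) = 0" using c(1) by blast
          moreover have "(\<Sum>u\<in>S. c u * E.Xs S \<omega> u) = (\<Sum>u\<in>S. c u * X u \<omega>)"
            by (rule sum.cong) (simp_all add: E.Xs_def)
          ultimately show ?case using SK by simp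
        qed
        have feq: "l * f u = (\<Sum>w\<in>tree_nbrs d u. f w)" if u: "u \<in> Iset d e K" for u
        proof -
          have uS: "u \<in> S" using u Iset_Sset SK by blast
          have uV: "u \<in> tree_vertices d" using u by (simp add: Iset_def)
          have "tree_ball d 1 {u} \<subseteq> S" unfolding ball1[OF uV] using nbrs_Sset[OF u] uS SK by blast
          then show ?thesis using f uS by (simp add: W_space_def)
        qed
        have "(\<Sum>x\<in>Sset d e K. c x * f x) = 0" by (rule E.hard[OF AEc feq])
        then show False using c(2) SK by simp
      qed
    qed
  qed
qed


end
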